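(* Let $N=2^n$, let $|\psi\rangle=\sum_{j=0}^{N-1}x_j|j\rangle$, and let $F=\{a_k\}_{k=-d}^{d}$ be a filter. Then the convolution $$|\psi*F\rangle=\sum_{m=0}^{N-1}(\psi*F)_m|m\rangle,\qquad (\psi*F)_m=\sum_{k=-d}^{d}a_k\,x_{[m-k \bmod N]},$$ can be implemented (up to normalization, as a block of a unitary circuit with one ancilla qubit applied to $|\psi\rangle$) using only $\mathcal{O}(d\log N+\log^2N)$ 1- and 2-qubit gates.
   Context: $|j\rangle$ denotes computational basis states on $n$ qubits. Gates are arbitrary 1- and 2-qubit unitaries. *)

theory Defs
  imports Complex_Main
begin

text \<open>States on q qubits are functions nat => complex, meaningful on indices < 2^q.
  Qubit i of basis index j is bit i of j (little endian).\<close>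

definition bit_of :: "nat \<Rightarrow> nat \<Rightarrow> nat" where
  "bit_of i j = (j div 2 ^ i) mod 2"

definition set_bit_to :: "nat \<Rightarrow> nat \<Rightarrow> nat \<Rightarrow> nat" where
  "set_bit_to i b j = j - bit_of i j * 2 ^ i + b * 2 ^ i"

definition unitary_mat :: "nat \<Rightarrow> (nat \<Rightarrow> nat \<Rightarrow> complex) \<Rightarrow> bool" where
  "unitary_mat k U \<longleftrightarrow> (\<forall>i<k. \<forall>j<k.
      (\<Sum>l<k. cnj (U l i) * U l j) = (if i = j then 1 else 0))"

text \<open>Gates: an arbitrary 1-qubit unitary on qubit t, or an arbitrary 2-qubit unitary on
  the ordered pair of qubits (t1, t2); basis index of the pair is 2*bit t1 + bit t2.\<close>
datatype gate =
    Gate1 "nat \<Rightarrow> nat \<Rightarrow> complex" nat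
  | Gate2 "nat \<Rightarrow> nat \<Rightarrow> complex" nat nat

fun gate_valid :: "nat \<Rightarrow> gate \<Rightarrow> bool" where
  "gate_valid q (Gate1 U t) \<longleftrightarrow> t < q \<and> unitary_mat 2 U"
| "gate_valid q (Gate2 U t1 t2) \<longleftrightarrow> t1 < q \<and> t2 < q \<and> t1 \<noteq> t2 \<and> unitary_mat 4 U"

fun apply_gate :: "gate \<Rightarrow> (nat \<Rightarrow> complex) \<Rightarrow> (nat \<Rightarrow> complex)" where
  "apply_gate (Gate1 U t) v = (\<lambda>j. \<Sum>b<2. U (bit_of t j) b * v (set_bit_to t b j))"
| "apply_gate (Gate2 U t1 t2) v = (\<lambda>j. \<Sum>b1<2. \<Sum>b2<2.
      U (2 * bit_of t1 j + bit_of t2 j) (2 * b1 + b2) *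
      v (set_bit_to t2 b2 (set_bit_to t1 b1 j)))"

definition circuit_valid :: "nat \<Rightarrow> gate list \<Rightarrow> bool" where
  "circuit_valid q C \<longleftrightarrow> (\<forall>g\<in>set C. gate_valid q g)"

definition run_circuit :: "gate list \<Rightarrow> (nat \<Rightarrow> complex) \<Rightarrow> (nat \<Rightarrow> complex)" where
  "run_circuit C v = fold apply_gate C v"

definition conv :: "nat \<Rightarrow> nat \<Rightarrow> (int \<Rightarrow> complex) \<Rightarrow> (nat \<Rightarrow> complex) \<Rightarrow> nat \<Rightarrow> complex" where
  "conv N d a x m = (\<Sum>k\<in>{-int d..int d}. a k * x (nat ((int m - k) mod int N)))"

end

theory Submission
  imports Defs "HOL-Computational_Algebra.Fundamental_Theorem_Algebra"
begin


lemma bit_of_lt2: "bit_of i j < 2" by (simp add: bit_of_def)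

lemma decomp: "j = j mod 2^i + 2^i * bit_of i j + (2 * 2^i) * (j div (2 * 2^i))"
proof -
  have a: "j = j mod 2^i + 2^i * (j div 2^i)" by simp
  have b: "j div 2^i = (j div 2^i) mod 2 + 2 * (j div 2^i div 2)" by simp
  have c: "j div 2^i div 2 = j div (2 * 2^i)" by (simp only: div_mult2_eq mult.commute[of 2 "2^i"])
  have "j = j mod 2^i + 2^i * ((j div 2^i) mod 2 + 2 * (j div (2 * 2^i)))"
    using a b c by simp
  then show ?thesis unfolding bit_of_def by (simp add: algebra_simps)
qed

lemma compose_parts:
  assumes "x < 2^i" "b < (2::nat)"
  shows "(x + 2^i * b + (2 * 2^i) * y) mod 2^i = x"
    and "bit_of i (x + 2^i * b + (2 * 2^i) * y) = b"
    and "(x + 2^i * b + (2 * 2^i) * y) div (2 * 2^i) = y"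
proof -
  have e: "x + 2^i * b + (2 * 2^i) * y = x + 2^i * (b + 2 * y)" by (simp add: algebra_simps)
  have d: "(x + 2^i * (b + 2*y)) div 2^i = b + 2*y" using assms by simp
  show "(x + 2^i * b + (2 * 2^i) * y) mod 2^i = x" unfolding e using assms by simp
  show "bit_of i (x + 2^i * b + (2 * 2^i) * y) = b" unfolding bit_of_def e d using assms by simp
  have "(x + 2^i * (b + 2*y)) div (2 * 2^i) = (x + 2^i * (b + 2*y)) div 2^i div 2"
    by (simp only: div_mult2_eq mult.commute[of 2 "2^i"])
  then show "(x + 2^i * b + (2 * 2^i) * y) div (2 * 2^i) = y" unfolding e d using assms by simp
qed

lemma set_bit_alt: "b < 2 \<Longrightarrow> set_bit_to i b j = j mod 2^i + 2^i * b + (2 * 2^i) * (j div (2 * 2^i))"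
proof -
  assume "b < 2"
  have e: "j = j mod 2^i + 2^i * bit_of i j + (2 * 2^i) * (j div (2 * 2^i))" by (rule decomp)
  have "set_bit_to i b j = j - bit_of i j * 2 ^ i + b * 2 ^ i" by (simp add: set_bit_to_def)
  also have "j - bit_of i j * 2 ^ i = j mod 2^i + (2 * 2^i) * (j div (2 * 2^i))"
    using e by (simp add: algebra_simps)
  finally show ?thesis by (simp add: algebra_simps)
qed

lemma cp_mod: "x < 2^i \<Longrightarrow> b < (2::nat) \<Longrightarrow> (x + 2^i * b + (2 * 2^i) * y) mod 2^i = x"
  using compose_parts(1) by blast
lemma cp_bit: "x < 2^i \<Longrightarrow> b < (2::nat) \<Longrightarrow> bit_of i (x + 2^i * b + (2 * 2^i) * y) = b"
  using compose_parts(2) by blast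
lemma cp_div: "x < 2^i \<Longrightarrow> b < (2::nat) \<Longrightarrow> (x + 2^i * b + (2 * 2^i) * y) div (2 * 2^i) = y"
  using compose_parts(3) by blast

lemma bit_set_same[simp]: "b < 2 \<Longrightarrow> bit_of i (set_bit_to i b j) = b"
  by (simp only: set_bit_alt cp_bit mod_less_divisor zero_less_power zero_less_numeral)

lemma bit_le: "bit_of i j * 2^i \<le> j"
proof -
  have "j = j mod 2^i + 2^i * bit_of i j + (2 * 2^i) * (j div (2 * 2^i))" by (rule decomp)
  then show ?thesis by (metis le_add1 le_add2 add.assoc mult.commute order_trans)
qed

lemma set_bit_self[simp]: "set_bit_to i (bit_of i j) j = j"
  using bit_le[of i j] by (simp add: set_bit_to_def)

lemma set_bit_mod: "b < 2 \<Longrightarrow> set_bit_to i b j mod 2^i = j mod 2^i"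
  by (simp only: set_bit_alt cp_mod mod_less_divisor zero_less_power zero_less_numeral)

lemma set_bit_div: "b < 2 \<Longrightarrow> set_bit_to i b j div (2 * 2^i) = j div (2 * 2^i)"
  by (simp only: set_bit_alt cp_div mod_less_divisor zero_less_power zero_less_numeral)

lemma set_set_same[simp]: "b < 2 \<Longrightarrow> c < 2 \<Longrightarrow> set_bit_to i c (set_bit_to i b j) = set_bit_to i c j"
  by (simp add: set_bit_alt[of c] set_bit_mod set_bit_div)


lemma bit_of_bit: "bit_of i j = of_bool (bit j i)"
  by (simp add: bit_of_def bit_iff_odd odd_iff_mod_2_eq_one)

lemma set_bit_nat_eq: "set_bit i (j::nat) = j + of_bool (\<not> bit j i) * 2 ^ i"
  by (rule set_bit_eq)

lemma set_unset_nat: "set_bit i (unset_bit i (j::nat)) = set_bit i j"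
  by (rule bit_eqI) (auto simp: bit_simps)

lemma unset_nat_id: "\<not> bit j i \<Longrightarrow> unset_bit i (j::nat) = j"
  by (rule bit_eqI) (auto simp: bit_simps)

lemma set_nat_id: "bit j i \<Longrightarrow> set_bit i (j::nat) = j"
  by (rule bit_eqI) (auto simp: bit_simps)

lemma set_bit_to_1: "set_bit_to i 1 j = set_bit i j"
proof (cases "bit j i")
  case True then show ?thesis using bit_le[of i j]
    by (simp add: set_nat_id set_bit_to_def bit_of_bit)
next
  case False then show ?thesis by (simp add: set_bit_nat_eq set_bit_to_def bit_of_bit)
qed

lemma set_bit_to_0: "set_bit_to i 0 j = unset_bit i j"
proof (cases "bit j i")
  case True
  have "set_bit i (unset_bit i j) = unset_bit i j + 2^i"
    by (simp add: set_bit_nat_eq bit_simps)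
  then have "unset_bit i j = j - 2^i" using True set_unset_nat[of i j] set_nat_id[OF True] by simp
  then show ?thesis using True by (simp add: set_bit_to_def bit_of_bit)
next
  case False then show ?thesis by (simp add: unset_nat_id set_bit_to_def bit_of_bit)
qed

lemma bit_set_bit_to: "b < 2 \<Longrightarrow> bit (set_bit_to i b j) k \<longleftrightarrow> (if k = i then b = 1 else bit j k)"
proof -
  assume "b < 2"
  then have "b = 0 \<or> b = 1" by auto
  then show ?thesis
  proof
    assume "b = 0" then show ?thesis by (simp add: set_bit_to_0 bit_simps)
  next
    assume "b = 1" then show ?thesis by (simp only: set_bit_to_1) (auto simp: bit_simps)
  qed
qed

lemma bit_of_set_other: "b < 2 \<Longrightarrow> k \<noteq> i \<Longrightarrow> bit_of k (set_bit_to i b j) = bit_of k j"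
  by (simp add: bit_of_bit bit_set_bit_to)

lemma set_bit_comm: "b < 2 \<Longrightarrow> c < 2 \<Longrightarrow> k \<noteq> i \<Longrightarrow>
   set_bit_to k c (set_bit_to i b j) = set_bit_to i b (set_bit_to k c j)"
  by (rule bit_eqI) (simp add: bit_set_bit_to)

lemma bit_of_eqI: "(\<And>k. bit_of k x = bit_of k y) \<Longrightarrow> x = (y::nat)"
  by (rule bit_eqI) (metis bit_of_bit of_bool_eq_iff)


lemma sum2: "(\<Sum>b<2::nat. f b) = f 0 + f 1"
  by (simp add: eval_nat_numeral)
lemma sum22: "(\<Sum>b1<2::nat. \<Sum>b2<2::nat. f (2*b1+b2)) = (\<Sum>l<4. f l)"
  by (simp add: eval_nat_numeral add.assoc)

fun adj :: "gate \<Rightarrow> gate" where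
  "adj (Gate1 U t) = Gate1 (\<lambda>i j. cnj (U j i)) t"
| "adj (Gate2 U t1 t2) = Gate2 (\<lambda>i j. cnj (U j i)) t1 t2"

lemma run_append: "run_circuit (C1 @ C2) v = run_circuit C2 (run_circuit C1 v)"
  by (simp add: run_circuit_def)
lemma run_Nil[simp]: "run_circuit [] v = v"
  by (simp add: run_circuit_def)
lemma run_Cons: "run_circuit (g # C) v = run_circuit C (apply_gate g v)"
  by (simp add: run_circuit_def)

lemma delta_sum2: "a < 2 \<Longrightarrow> (\<Sum>c<2::nat. (if a = c then 1 else 0) * f c) = (f a :: complex)"
  by (cases a) (auto simp: sum2)

lemma delta_sum22: "a1 < 2 \<Longrightarrow> a2 < 2 \<Longrightarrow>
  (\<Sum>c1<2::nat. \<Sum>c2<2::nat. (if 2*a1+a2 = 2*c1+c2 then 1 else 0) * f c1 c2) = (f a1 a2 :: complex)"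
proof -
  assume "a1 < 2" "a2 < 2"
  then have "a1 = 0 \<or> a1 = 1" "a2 = 0 \<or> a2 = 1" by auto
  then show ?thesis by (elim disjE) (simp_all add: sum2)
qed

lemma adj_gate1:
  assumes U: "unitary_mat 2 U"
  shows "apply_gate (adj (Gate1 U t)) (apply_gate (Gate1 U t) v) = v"
proof
  fix j
  let ?a = "bit_of t j"
  have a2: "?a < 2" by (rule bit_of_lt2)
  have "apply_gate (adj (Gate1 U t)) (apply_gate (Gate1 U t) v) j
     = (\<Sum>b<2. cnj (U b ?a) * (\<Sum>c<2. U b c * v (set_bit_to t c j)))"
    apply (simp only: apply_gate.simps adj.simps)
    apply (rule sum.cong[OF refl])
    apply simp
    done
  also have "\<dots> = (\<Sum>b<2. \<Sum>c<2. cnj (U b ?a) * U b c * v (set_bit_to t c j))"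
    by (simp add: sum_distrib_left mult.assoc)
  also have "\<dots> = (\<Sum>c<2. (\<Sum>b<2. cnj (U b ?a) * U b c) * v (set_bit_to t c j))"
    by (subst sum.swap) (simp add: sum_distrib_right)
  also have "\<dots> = (\<Sum>c<2. (if ?a = c then 1 else 0) * v (set_bit_to t c j))"
    using U a2 unfolding unitary_mat_def by (intro sum.cong refl) auto
  also have "\<dots> = v j" using a2 by (simp add: delta_sum2)
  finally show "apply_gate (adj (Gate1 U t)) (apply_gate (Gate1 U t) v) j = v j" .
qed

lemma adj_gate2:
  assumes U: "unitary_mat 4 U" and ne: "t1 \<noteq> t2"
  shows "apply_gate (adj (Gate2 U t1 t2)) (apply_gate (Gate2 U t1 t2) v) = v"
proof
  fix j
  let ?a1 = "bit_of t1 j" and ?a2 = "bit_of t2 j"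
  let ?J = "\<lambda>c1 c2. set_bit_to t2 c2 (set_bit_to t1 c1 j)"
  have a2: "?a1 < 2" "?a2 < 2" by (rule bit_of_lt2)+
  have bits: "bit_of t1 (?J b1 b2) = b1" "bit_of t2 (?J b1 b2) = b2" if "b1 < 2" "b2 < 2" for b1 b2
    using that ne by (simp_all add: bit_of_set_other)
  have JJ: "set_bit_to t2 c2 (set_bit_to t1 c1 (?J b1 b2)) = ?J c1 c2"
    if "b1 < 2" "b2 < 2" "c1 < 2" "c2 < 2" for b1 b2 c1 c2
    using that ne by (simp add: set_bit_comm[of _ _ t1 t2])
  have "apply_gate (adj (Gate2 U t1 t2)) (apply_gate (Gate2 U t1 t2) v) j
     = (\<Sum>b1<2. \<Sum>b2<2. cnj (U (2*b1+b2) (2*?a1+?a2)) *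
          (\<Sum>c1<2. \<Sum>c2<2. U (2*b1+b2) (2*c1+c2) * v (?J c1 c2)))"
    apply (simp only: apply_gate.simps adj.simps)
    apply (rule sum.cong[OF refl])+
    apply (simp add: bits JJ)
    done
  also have "\<dots> = (\<Sum>c1<2. \<Sum>c2<2. (\<Sum>b1<2. \<Sum>b2<2. cnj (U (2*b1+b2) (2*?a1+?a2)) * U (2*b1+b2) (2*c1+c2)) * v (?J c1 c2))"
    by (simp add: sum2 algebra_simps)
  also have "\<dots> = (\<Sum>c1<2. \<Sum>c2<2. (if 2*?a1+?a2 = 2*c1+c2 then 1 else 0) * v (?J c1 c2))"
  proof (intro sum.cong refl)
    fix c1 c2 assume "c1 \<in> {..<2::nat}" "c2 \<in> {..<2::nat}"
    then have "2*c1+c2 < 4" by auto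
    moreover have "2*?a1+?a2 < 4" using a2 by auto
    ultimately show "(\<Sum>b1<2. \<Sum>b2<2. cnj (U (2*b1+b2) (2*?a1+?a2)) * U (2*b1+b2) (2*c1+c2)) * v (?J c1 c2)
        = (if 2*?a1+?a2 = 2*c1+c2 then 1 else 0) * v (?J c1 c2)"
      using U unfolding unitary_mat_def sum22[where f="\<lambda>l. cnj (U l (2*?a1+?a2)) * U l (2*c1+c2)"]
      by auto
  qed
  also have "\<dots> = v (?J ?a1 ?a2)"
    using a2 by (rule delta_sum22)
  also have "\<dots> = v j" using ne by (simp add: set_bit_comm)
  finally show "apply_gate (adj (Gate2 U t1 t2)) (apply_gate (Gate2 U t1 t2) v) j = v j" .
qed

lemma adj_gate: "gate_valid q g \<Longrightarrow> apply_gate (adj g) (apply_gate g v) = v"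
  by (cases g) (auto simp del: apply_gate.simps adj.simps intro: adj_gate1 adj_gate2)

lemma adj_circuit: "circuit_valid q C \<Longrightarrow> run_circuit (rev (map adj C)) (run_circuit C v) = v"
proof (induction C arbitrary: v)
  case Nil then show ?case by simp
next
  case (Cons g C)
  have g: "gate_valid q g" and C: "circuit_valid q C" using Cons.prems by (auto simp: circuit_valid_def)
  have "run_circuit (rev (map adj (g # C))) (run_circuit (g # C) v)
      = apply_gate (adj g) (run_circuit (rev (map adj C)) (run_circuit C (apply_gate g v)))"
    by (simp add: run_append run_Cons)
  also have "\<dots> = v" using Cons.IH[OF C] adj_gate[OF g] by simp
  finally show ?case .
qed


definition wM :: "nat \<Rightarrow> int \<Rightarrow> complex" where
  "wM M x = cis (2 * pi * of_int x / of_nat M)"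

lemma wM_add: "wM M (x + y) = wM M x * wM M y"
  by (simp add: wM_def cis_mult add_divide_distrib distrib_left)

lemma wM_0[simp]: "wM M 0 = 1" by (simp add: wM_def)

lemma wM_norm[simp]: "cmod (wM M x) = 1" by (simp add: wM_def)

lemma wM_cnj: "cnj (wM M x) = wM M (- x)" by (simp add: wM_def cis_cnj)

lemma wM_mult_cnj: "wM M x * wM M (- x) = 1" by (simp add: wM_add[symmetric])

lemma wM_period: "M > 0 \<Longrightarrow> wM M (x + int M * k) = wM M x"
proof -
  assume M: "M > 0"
  have e: "2 * pi * of_int (int M * k) / of_nat M = 2 * pi * (of_int k :: real)"
    using M by simp
  have "wM M (int M * k) = cis (2 * pi * of_int k)"
    unfolding wM_def e by simp
  also have "\<dots> = 1" by (rule cis_multiple_2pi) simp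
  finally show ?thesis by (simp add: wM_add)
qed

lemma wM_pow: "wM M x ^ k = wM M (x * int k)"
  by (induction k) (simp_all add: wM_add distrib_left mult.commute)

lemma wM_eq1: "M > 0 \<Longrightarrow> wM M x = 1 \<longleftrightarrow> int M dvd x"
proof
  assume M: "M > 0" and h: "wM M x = 1"
  then have "cos (2 * pi * of_int x / of_nat M) = 1"
    unfolding wM_def by (metis cis.sel(1) one_complex.sel(1))
  then obtain n :: int where n: "2 * pi * of_int x / of_nat M = of_int n * 2 * pi"
    by (auto simp: cos_one_2pi_int)
  then have "of_int x = (of_int n * of_nat M :: real)" using M by (simp add: field_simps)
  then have "x = n * int M" by (metis of_int_eq_iff of_int_mult of_int_of_nat_eq)
  then show "int M dvd x" by simp
next
  assume M: "M > 0" and "int M dvd x"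
  then obtain k where "x = int M * k" by (auto elim: dvdE)
  then show "wM M x = 1" using wM_period[OF M, of 0 k] by simp
qed

lemma wM_sum: "M > 0 \<Longrightarrow> (\<Sum>y<M. wM M (e * int y)) = (if int M dvd e then of_nat M else 0)"
proof -
  assume M: "M > 0"
  have s: "(\<Sum>y<M. wM M (e * int y)) = (\<Sum>y<M. wM M e ^ y)" by (simp add: wM_pow)
  show ?thesis
  proof (cases "int M dvd e")
    case True
    then have "wM M e = 1" using wM_eq1[OF M] by simp
    then show ?thesis using True s by simp
  next
    case False
    then have ne: "wM M e \<noteq> 1" using wM_eq1[OF M] by simp
    have "wM M e ^ M = 1" using wM_pow wM_eq1[OF M] by (metis dvd_triv_right mult.commute)
    then show ?thesis using False s ne by (simp add: geometric_sum)
  qed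
qed

lemma wM_inj: "M > 0 \<Longrightarrow> inj_on (\<lambda>k. wM M (int k)) {..<M}"
proof (rule inj_onI)
  fix a b assume M: "M > 0" and a: "a \<in> {..<M}" and b: "b \<in> {..<M}" and e: "wM M (int a) = wM M (int b)"
  have "wM M (int a - int b) = wM M (int a) * wM M (- int b)" by (simp add: wM_add[symmetric])
  also have "\<dots> = 1" using e wM_mult_cnj by simp
  finally have "int M dvd int a - int b" using wM_eq1[OF M] by simp
  show "a = b"
  proof (rule ccontr)
    assume "a \<noteq> b"
    then have "int a - int b \<noteq> 0" by simp
    then have "\<bar>int M\<bar> \<le> \<bar>int a - int b\<bar>" using dvd_imp_le_int \<open>int M dvd int a - int b\<close> by blast
    moreover have "\<bar>int a - int b\<bar> < int M" using a b by auto
    ultimately show False by simp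
  qed
qed


definition H2 :: "nat \<Rightarrow> nat \<Rightarrow> complex" where
  "H2 a b = complex_of_real ((if a = 1 \<and> b = 1 then -1 else 1) / sqrt 2)"

definition cp :: "complex \<Rightarrow> nat \<Rightarrow> nat \<Rightarrow> complex" where
  "cp \<phi> a b = (if a = b then (if a = 3 then \<phi> else 1) else 0)"

definition ph :: "complex \<Rightarrow> nat \<Rightarrow> nat \<Rightarrow> complex" where
  "ph \<phi> a b = (if a = b then (if a = 1 then \<phi> else 1) else 0)"

lemma less2_cases: "(a::nat) < 2 \<Longrightarrow> a = 0 \<or> a = 1" by auto

lemma set_bit_id: "bit_of t j = b \<Longrightarrow> set_bit_to t b j = j"
  by auto

lemma apply_cp: "apply_gate (Gate2 (cp \<phi>) t1 t2) v j =
   (if bit_of t1 j = 1 \<and> bit_of t2 j = 1 then \<phi> else 1) * v j"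
proof -
  let ?a1 = "bit_of t1 j" and ?a2 = "bit_of t2 j"
  have a: "?a1 < 2" "?a2 < 2" by (rule bit_of_lt2)+
  have "apply_gate (Gate2 (cp \<phi>) t1 t2) v j = (\<Sum>b1<2. \<Sum>b2<2.
      (if 2*?a1+?a2 = 2*b1+b2 then 1 else 0) * ((if 2*?a1+?a2 = 3 then \<phi> else 1) *
      v (set_bit_to t2 b2 (set_bit_to t1 b1 j))))"
    apply (simp only: apply_gate.simps)
    apply (intro sum.cong refl)
    apply (simp add: cp_def)
    done
  also have "\<dots> = (if 2*?a1+?a2 = 3 then \<phi> else 1) * v (set_bit_to t2 ?a2 (set_bit_to t1 ?a1 j))"
    using a by (rule delta_sum22)
  also have "\<dots> = (if ?a1 = 1 \<and> ?a2 = 1 then \<phi> else 1) * v j"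
    using a by auto
  finally show ?thesis .
qed

lemma apply_ph: "apply_gate (Gate1 (ph \<phi>) t) v j = (if bit_of t j = 1 then \<phi> else 1) * v j"
proof -
  have a: "bit_of t j = 0 \<or> bit_of t j = 1" using bit_of_lt2 less2_cases by blast
  show ?thesis using a by (elim disjE) (simp_all add: sum2 ph_def set_bit_id)
qed

lemma unitary_H2: "unitary_mat 2 H2"
  unfolding unitary_mat_def
proof (intro allI impI)
  fix i j :: nat assume "i < 2" "j < 2"
  then have "i = 0 \<or> i = 1" "j = 0 \<or> j = 1" by auto
  moreover have s: "complex_of_real (1 / sqrt 2) * complex_of_real (1 / sqrt 2) = 1/2"
  proof -
    have "1 / sqrt 2 * (1 / sqrt 2) = (1/2::real)" by simp
    then show ?thesis by (metis of_real_mult of_real_divide of_real_1 of_real_numeral)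
  qed
  ultimately show "(\<Sum>l<2. cnj (H2 l i) * H2 l j) = (if i = j then 1 else 0)"
    by (elim disjE) (simp_all add: sum2 H2_def s)
qed

lemma norm1_cnj: "cmod \<phi> = 1 \<Longrightarrow> cnj \<phi> * \<phi> = 1"
  by (metis complex_norm_square mult.commute of_real_1 one_power2)

lemma diag_unitary:
  assumes "\<And>l i. U l i = (if l = i then d i else 0)" "\<And>i. i < k \<Longrightarrow> cnj (d i) * d i = 1"
  shows "unitary_mat k U"
  unfolding unitary_mat_def
proof (intro allI impI)
  fix i j assume ij: "i < k" "j < k"
  have "(\<Sum>l<k. cnj (U l i) * U l j) = (\<Sum>l<k. if l = i then cnj (d i) * (if i = j then d j else 0) else 0)"
    by (intro sum.cong refl) (auto simp: assms(1))
  also have "\<dots> = (if i = j then 1 else 0)" using ij assms(2) by simp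
  finally show "(\<Sum>l<k. cnj (U l i) * U l j) = (if i = j then 1 else 0)" .
qed

lemma unitary_cp: "cmod \<phi> = 1 \<Longrightarrow> unitary_mat 4 (cp \<phi>)"
  by (rule diag_unitary[where d="\<lambda>i. if i = 3 then \<phi> else 1"]) (auto simp: cp_def norm1_cnj)

lemma unitary_ph: "cmod \<phi> = 1 \<Longrightarrow> unitary_mat 2 (ph \<phi>)"
  by (rule diag_unitary[where d="\<lambda>i. if i = 1 then \<phi> else 1"]) (auto simp: ph_def norm1_cnj)

lemma adj_H2: "adj (Gate1 H2 t) = Gate1 H2 t"
  by (simp add: H2_def fun_eq_iff)  

lemma adj_cp: "adj (Gate2 (cp \<phi>) t1 t2) = Gate2 (cp (cnj \<phi>)) t1 t2"
  by (simp add: cp_def fun_eq_iff)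

lemma adj_ph: "adj (Gate1 (ph \<phi>) t) = Gate1 (ph (cnj \<phi>)) t"
  by (simp add: ph_def fun_eq_iff)


definition revp :: "nat \<Rightarrow> nat \<Rightarrow> nat \<Rightarrow> nat" where
  "revp n l j = (\<Sum>i\<in>{l..<n}. bit_of i j * 2^(n-1-i))"

definition cpg :: "nat \<Rightarrow> nat \<Rightarrow> nat \<Rightarrow> gate" where
  "cpg n l m = Gate2 (cp (wM (2^n) (int (2^m * 2^(n-1-l))))) l m"

definition stage :: "nat \<Rightarrow> nat \<Rightarrow> gate list" where
  "stage n l = Gate1 H2 l # map (cpg n l) [0..<l]"

fun qf :: "nat \<Rightarrow> nat \<Rightarrow> gate list" where
  "qf n 0 = []"
| "qf n (Suc k) = qf n k @ stage n (n - Suc k)"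

lemma mod_step: "j mod (2 * 2^i) = j mod 2^i + 2^i * bit_of i j"
proof -
  have e: "j = (j mod 2^i + 2^i * bit_of i j) + (2 * 2^i) * (j div (2 * 2^i))"
    using decomp[of j i] by simp
  have b: "2^i * bit_of i j \<le> 2^i * 1" using bit_of_lt2[of i j] by (intro mult_le_mono2) simp
  have x: "j mod 2^i < 2^i" by simp
  have "j mod 2^i + 2^i * bit_of i j < 2 * 2^i" using b x by linarith
  then have "(j mod 2^i + 2^i * bit_of i j + (2 * 2^i) * (j div (2 * 2^i))) mod (2 * 2^i) = j mod 2^i + 2^i * bit_of i j"
    by simp
  then show ?thesis using e by simp
qed

lemma run_cps: "run_circuit (map (cpg n l) [0..<i]) \<psi> j =
  (\<Prod>m<i. if bit_of l j = 1 \<and> bit_of m j = 1 then wM (2^n) (int (2^m * 2^(n-1-l))) else 1) * \<psi> j"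
proof (induction i arbitrary: \<psi>)
  case 0 then show ?case by simp
next
  case (Suc i)
  have "run_circuit (map (cpg n l) [0..<Suc i]) \<psi> j = apply_gate (cpg n l i) (run_circuit (map (cpg n l) [0..<i]) \<psi>) j"
    by (simp add: run_append run_Cons)
  also have "\<dots> = (if bit_of l j = 1 \<and> bit_of i j = 1 then wM (2^n) (int (2^i * 2^(n-1-l))) else 1) *
      run_circuit (map (cpg n l) [0..<i]) \<psi> j"
    unfolding cpg_def by (rule apply_cp)
  finally show ?case using Suc.IH by (simp add: mult_ac)
qed

lemma prod_phase: "(\<Prod>m<i. if bit_of l j = 1 \<and> bit_of m j = 1 then wM N (int (2^m * P)) else 1)
   = wM N (int (bit_of l j * P * (j mod 2^i)))"
proof (induction i)
  case 0 then show ?case by simp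
next
  case (Suc i)
  have f: "(if bit_of l j = 1 \<and> bit_of i j = 1 then wM N (int (2^i * P)) else 1)
        = wM N (int (bit_of l j * P * (2^i * bit_of i j)))"
  proof -
    have "bit_of l j = 0 \<or> bit_of l j = 1" "bit_of i j = 0 \<or> bit_of i j = 1"
      using bit_of_lt2 less2_cases by blast+
    then show ?thesis by (elim disjE) (simp_all add: mult_ac)
  qed
  show ?case using Suc.IH f
    by (simp add: mod_step wM_add[symmetric] algebra_simps)
qed

lemma wM_half: "n \<ge> 1 \<Longrightarrow> wM (2^n) (int (2^(n-1))) = -1"
proof -
  assume n: "n \<ge> 1"
  have "(2::real)^n = 2 * 2^(n-1)" using n by (metis Suc_diff_le diff_Suc_1 power_Suc)
  then have "2 * pi * real (2^(n-1)) / real (2^n) = pi" by simp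
  then show ?thesis by (simp add: wM_def)
qed

lemma H2_phase: "n \<ge> 1 \<Longrightarrow> a < 2 \<Longrightarrow> b < 2 \<Longrightarrow>
   H2 a b = wM (2^n) (int (2^(n-1) * a * b)) * complex_of_real (1 / sqrt 2)"
proof -
  assume n: "n \<ge> 1" and "a < 2" "b < 2"
  then have "a = 0 \<or> a = 1" "b = 0 \<or> b = 1" by auto
  then show ?thesis using wM_half[OF n] by (elim disjE) (simp_all add: H2_def)
qed

lemma run_stage: "l < n \<Longrightarrow> run_circuit (stage n l) \<psi> j =
   complex_of_real (1 / sqrt 2) * (\<Sum>b<2. wM (2^n) (int (2^(n-1) * bit_of l j * b)) *
      wM (2^n) (int (bit_of l j * 2^(n-1-l) * (j mod 2^l))) * \<psi> (set_bit_to l b j))"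
proof -
  assume ln: "l < n"
  have "run_circuit (stage n l) \<psi> j = run_circuit (map (cpg n l) [0..<l]) (apply_gate (Gate1 H2 l) \<psi>) j"
    by (simp add: stage_def run_Cons)
  also have "\<dots> = wM (2^n) (int (bit_of l j * 2^(n-1-l) * (j mod 2^l))) * apply_gate (Gate1 H2 l) \<psi> j"
    by (simp only: run_cps prod_phase)
  also have "apply_gate (Gate1 H2 l) \<psi> j = (\<Sum>b<2. H2 (bit_of l j) b * \<psi> (set_bit_to l b j))"
    by simp
  also have "\<dots> = (\<Sum>b<2. wM (2^n) (int (2^(n-1) * bit_of l j * b)) * complex_of_real (1 / sqrt 2) * \<psi> (set_bit_to l b j))"
  proof (intro sum.cong refl)
    fix b assume "b \<in> {..<2::nat}"
    then have "b < 2" by simp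
    have "n \<ge> 1" using ln by simp
    then show "H2 (bit_of l j) b * \<psi> (set_bit_to l b j) = wM (2^n) (int (2^(n-1) * bit_of l j * b)) * complex_of_real (1 / sqrt 2) * \<psi> (set_bit_to l b j)"
      using H2_phase[OF _ bit_of_lt2 \<open>b < 2\<close>] by simp
  qed
  finally show ?thesis by (simp add: sum_distrib_left mult_ac)
qed


lemma sum_split2: "(\<Sum>t<2*K. F t) = (\<Sum>b<2::nat. \<Sum>t<K. F (b + 2*t))"
proof (induction K)
  case 0 then show ?case by simp
next
  case (Suc K)
  have "(\<Sum>t<2*Suc K. F t) = (\<Sum>t<2*K. F t) + F (2*K) + F (2*K+1)"
    by (simp add: sum.lessThan_Suc)
  also have "\<dots> = (\<Sum>b<2::nat. \<Sum>t<K. F (b + 2*t)) + F (2*K) + F (2*K+1)" using Suc by simp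
  also have "\<dots> = (\<Sum>b<2::nat. \<Sum>t<Suc K. F (b + 2*t))"
    by (simp add: sum2 sum.lessThan_Suc algebra_simps)
  finally show ?case .
qed

lemma pow_facts: "i < n \<Longrightarrow> (2::nat)^i * 2^(n-1-i) = 2^(n-1) \<and> 2 * 2^i * 2^(n-1-i) = (2::nat)^n"
proof -
  assume "i < n"
  then have a: "i + (n-1-i) = n - 1" and b: "Suc (n-1) = n" by auto
  have "(2::nat)^i * 2^(n-1-i) = 2^(n-1)" by (metis a power_add)
  moreover have "2 * (2::nat)^(n-1) = 2^n" by (metis b power_Suc)
  ultimately show ?thesis by (metis mult.assoc)
qed

lemma term_eq:
  assumes "i < n"
  shows "wM (2^n) (int (2^(n-1)*y*b)) * wM (2^n) (int (y*2^(n-1-i)*x)) * wM (2^n) (int ((x + 2^i*b + 2*2^i*t) * R))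
       = wM (2^n) (int ((x + 2^i*(b + 2*t)) * (y*2^(n-1-i) + R)))"
proof -
  define P :: nat where "P = 2^(n-1-i)"
  define A :: nat where "A = 2^i"
  have p1: "A * P = 2^(n-1)" and p2: "2 * A * P = 2^n" using pow_facts[OF assms] by (simp_all add: A_def P_def)
  have "(x + A*(b + 2*t)) * (y*P + R) = (A*P)*y*b + y*P*x + (x + A*b + 2*A*t)*R + (2*A*P)*(t*y)"
    by (simp add: algebra_simps)
  then have e: "(x + 2^i*(b + 2*t)) * (y*2^(n-1-i) + R) = 2^(n-1)*y*b + y*2^(n-1-i)*x + (x + 2^i*b + 2*2^i*t)*R + 2^n*(t*y)"
    unfolding p1 p2 by (simp add: A_def P_def)
  show ?thesis unfolding e
    using wM_period[of "2^n" "int (2^(n-1)*y*b) + int (y*2^(n-1-i)*x) + int ((x + 2^i*b + 2*2^i*t) * R)" "int (t*y)"]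
    by (simp add: wM_add)
qed

lemma set_mod2: "b < 2 \<Longrightarrow> set_bit_to i b j mod (2 * 2^i) = j mod 2^i + 2^i * b"
  using mod_step[of "set_bit_to i b j" i] by (simp add: set_bit_mod)

lemma set_divn: "b < 2 \<Longrightarrow> i < n \<Longrightarrow> set_bit_to i b j div 2^n = j div 2^n"
proof -
  assume b: "b < 2" and i: "i < n"
  have e: "(2::nat)^n = 2 * 2^i * 2^(n - Suc i)" using i
    by (metis Suc_leI le_add_diff_inverse power_add power_Suc)
  show ?thesis unfolding e by (simp only: div_mult2_eq[of _ "2*2^i" "2^(n-Suc i)"] set_bit_div[OF b])
qed

lemma revp_set: "b < 2 \<Longrightarrow> revp n (Suc i) (set_bit_to i b j) = revp n (Suc i) j"
  unfolding revp_def by (intro sum.cong refl) (simp add: bit_of_set_other)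

lemma revp_step: "i < n \<Longrightarrow> revp n i j = bit_of i j * 2^(n-1-i) + revp n (Suc i) j"
  unfolding revp_def by (simp add: sum.atLeast_Suc_lessThan)

lemma qft_inv: "k \<le> n \<Longrightarrow> run_circuit (qf n k) v j = complex_of_real ((1/sqrt 2)^k) *
   (\<Sum>t<2^k. wM (2^n) (int ((j mod 2^(n-k) + 2^(n-k)*t) * revp n (n-k) j)) *
       v (j mod 2^(n-k) + 2^(n-k)*t + 2^n*(j div 2^n)))"
proof (induction k arbitrary: j)
  case 0
  then show ?case by (simp add: revp_def)
next
  case (Suc k)
  define i where "i = n - Suc k"
  have i: "i < n" "n - k = Suc i" using Suc.prems by (auto simp: i_def)
  define c where "c = complex_of_real (1 / sqrt 2)"
  define y where "y = bit_of i j"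
  define x where "x = j mod 2^i"
  define h where "h = j div 2^n"
  define R where "R = revp n (Suc i) j"
  have y: "y < 2" by (simp add: y_def bit_of_lt2)
  have cpow: "complex_of_real ((1/sqrt 2)^k) = c^k" by (simp add: c_def)
  have cpow2: "complex_of_real (1/sqrt 2 * (1/sqrt 2)^k) = c * c^k" by (simp add: c_def)
  have IH: "run_circuit (qf n k) v (set_bit_to i b j) = c^k * (\<Sum>t<2^k. wM (2^n) (int ((x + 2^i*b + 2*2^i*t) * R)) *
       v (x + 2^i*b + 2*2^i*t + 2^n*h))" if b: "b < 2" for b
  proof -
    have kn: "k \<le> n" using Suc.prems by simp
    show ?thesis using Suc.IH[OF kn, of "set_bit_to i b j"]
      unfolding i(2) power_Suc set_mod2[OF b] set_divn[OF b i(1)] revp_set[OF b] cpow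
        x_def[symmetric] h_def[symmetric] R_def[symmetric] .
  qed
  have "run_circuit (qf n (Suc k)) v j = run_circuit (stage n i) (run_circuit (qf n k) v) j"
    by (simp add: run_append i_def)
  also have "\<dots> = c * (\<Sum>b<2. wM (2^n) (int (2^(n-1) * y * b)) * wM (2^n) (int (y * 2^(n-1-i) * x)) *
       (c^k * (\<Sum>t<2^k. wM (2^n) (int ((x + 2^i*b + 2*2^i*t) * R)) * v (x + 2^i*b + 2*2^i*t + 2^n*h))))"
    unfolding run_stage[OF i(1)] c_def[symmetric] y_def[symmetric] x_def[symmetric]
    by (intro arg_cong2[where f="(*)"] refl sum.cong) (simp_all add: IH)
  also have "\<dots> = c * c^k * (\<Sum>b<2. \<Sum>t<2^k. wM (2^n) (int ((x + 2^i*(b + 2*t)) * (y*2^(n-1-i) + R))) *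
       v (x + 2^i*(b + 2*t) + 2^n*h))"
  proof -
    define A where "A b = wM (2^n) (int (2^(n-1) * y * b))" for b
    define B where "B = wM (2^n) (int (y * 2^(n-1-i) * x))"
    define C where "C b t = wM (2^n) (int ((x + 2^i*b + 2*2^i*t) * R))" for b t
    define D where "D b t = wM (2^n) (int ((x + 2^i*(b + 2*t)) * (y*2^(n-1-i) + R)))" for b t
    define V where "V b t = v (x + 2^i*b + 2*2^i*t + 2^n*h)" for b t
    have V': "v (x + 2^i*(b + 2*t) + 2^n*h) = V b t" for b t by (simp add: V_def algebra_simps)
    have ABC: "A b * B * C b t = D b t" for b t unfolding A_def B_def C_def D_def by (rule term_eq[OF i(1)])
    have "c * (\<Sum>b<2. A b * B * (c^k * (\<Sum>t<2^k. C b t * V b t))) = c * c^k * (\<Sum>b<2. \<Sum>t<2^k. (A b * B * C b t) * V b t)"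
      by (simp add: sum_distrib_left mult_ac)
    also have "\<dots> = c * c^k * (\<Sum>b<2. \<Sum>t<2^k. D b t * V b t)" by (simp only: ABC)
    finally show ?thesis unfolding A_def[symmetric] B_def[symmetric] C_def[symmetric] V_def[symmetric]
      D_def[symmetric] V' .
  qed
  also have "\<dots> = c * c^k * (\<Sum>t<2*2^k. wM (2^n) (int ((x + 2^i*t) * (y*2^(n-1-i) + R))) * v (x + 2^i*t + 2^n*h))"
    by (simp only: sum_split2)
  finally have F: "run_circuit (qf n (Suc k)) v j = c * c ^ k * (\<Sum>t<2 * 2 ^ k. wM (2 ^ n) (int ((x + 2 ^ i * t) * (y * 2 ^ (n - 1 - i) + R))) * v (x + 2 ^ i * t + 2 ^ n * h))" .
  show ?case unfolding i_def[symmetric] power_Suc cpow2 revp_step[OF i(1)]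
    using F unfolding x_def y_def R_def h_def .
qed


definition qft :: "nat \<Rightarrow> gate list" where "qft n = qf n n"
definition iqft :: "nat \<Rightarrow> gate list" where "iqft n = rev (map adj (qft n))"

definition cq :: "nat \<Rightarrow> complex" where "cq n = complex_of_real ((1 / sqrt 2)^n)"

lemma qft_sem: "run_circuit (qft n) v j = cq n *
   (\<Sum>t<2^n. wM (2^n) (int (t * revp n 0 j)) * v (t + 2^n * (j div 2^n)))"
  using qft_inv[of n n v j] by (simp add: qft_def cq_def)

lemma length_stage: "length (stage n l) = Suc l" by (simp add: stage_def)

lemma length_qf: "k \<le> n \<Longrightarrow> length (qf n k) \<le> k * n"
  by (induction k) (auto simp: length_stage)

lemma length_qft: "length (qft n) \<le> n * n" by (simp add: qft_def length_qf)
lemma length_iqft: "length (iqft n) \<le> n * n" by (simp add: iqft_def length_qft)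

lemma wM_norm_gate: "cmod (wM M x) = 1" by simp

lemma valid_stage: "l < n \<Longrightarrow> circuit_valid (n + 1) (stage n l)"
  by (auto simp: circuit_valid_def stage_def cpg_def unitary_H2 unitary_cp)

lemma valid_adj_stage: "l < n \<Longrightarrow> circuit_valid (n + 1) (map adj (stage n l))"
  by (auto simp: circuit_valid_def stage_def cpg_def unitary_H2 unitary_cp adj_H2 adj_cp
       simp del: adj.simps)

lemma valid_qf: "k \<le> n \<Longrightarrow> circuit_valid (n + 1) (qf n k) \<and> circuit_valid (n + 1) (map adj (qf n k))"
proof (induction k)
  case 0 then show ?case by (simp add: circuit_valid_def)
next
  case (Suc k)
  then have "n - Suc k < n" by simp
  have "circuit_valid (n + 1) (stage n (n - Suc k))" "circuit_valid (n + 1) (map adj (stage n (n - Suc k)))"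
    using valid_stage[OF \<open>n - Suc k < n\<close>] valid_adj_stage[OF \<open>n - Suc k < n\<close>] by blast+
  moreover have "circuit_valid (n + 1) (qf n k) \<and> circuit_valid (n + 1) (map adj (qf n k))" using Suc by simp
  ultimately show ?case unfolding circuit_valid_def by auto
qed

lemma valid_qft: "circuit_valid (n + 1) (qft n)" using valid_qf[of n n] by (simp add: qft_def)
lemma valid_iqft: "circuit_valid (n + 1) (iqft n)" using valid_qf[of n n] by (simp add: iqft_def qft_def circuit_valid_def)

lemma bit_of_add_high: "bit_of k (x + 2^(Suc k) * y) = bit_of k x"
proof -
  have e: "x + 2^(Suc k) * y = x + 2^k * (2 * y)" by (simp add: mult_ac)
  have "(x + 2^(Suc k) * y) div 2^k = x div 2^k + 2 * y"
    unfolding e by simp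
  then show ?thesis by (simp add: bit_of_def)
qed

lemma sum_bits_lt: "(\<And>i. i < n \<Longrightarrow> c i < 2) \<Longrightarrow> (\<Sum>i<n. c i * 2^i) < (2::nat)^n"
proof (induction n)
  case 0 then show ?case by simp
next
  case (Suc n)
  have "(\<Sum>i<n. c i * 2^i) < 2^n" using Suc by simp
  moreover have "c n * 2^n \<le> 2^n" using mult_le_mono1[of "c n" 1 "2^n"] Suc.prems[of n] by simp
  moreover have "(\<Sum>i<Suc n. c i * 2^i) = (\<Sum>i<n. c i * 2^i) + c n * 2^n" by simp
  moreover have "(2::nat)^Suc n = 2 * 2^n" by simp
  ultimately show ?case by linarith
qed

lemma bit_of_sum: "(\<And>i. i < n \<Longrightarrow> c i < 2) \<Longrightarrow> k < n \<Longrightarrow> bit_of k (\<Sum>i<n. c i * 2^i) = c k"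
proof (induction n)
  case 0 then show ?case by simp
next
  case (Suc n)
  have lt: "(\<Sum>i<n. c i * 2^i) < 2^n" using Suc.prems(1) by (intro sum_bits_lt) simp
  show ?case
  proof (cases "k < n")
    case True
    obtain d where d: "n = Suc (k + d)" using True less_iff_Suc_add by blast
    have p: "(2::nat)^n = 2^(Suc k) * 2^d" unfolding d by (simp add: power_add)
    have "(\<Sum>i<Suc n. c i * 2^i) = (\<Sum>i<n. c i * 2^i) + c n * 2^n" by simp
    also have "\<dots> = (\<Sum>i<n. c i * 2^i) + 2^(Suc k) * (c n * 2^d)" unfolding p by (simp only: mult_ac)
    finally have eq: "(\<Sum>i<Suc n. c i * 2^i) = (\<Sum>i<n. c i * 2^i) + 2^(Suc k) * (c n * 2^d)" .
    have c: "\<And>i. i < n \<Longrightarrow> c i < 2" using Suc.prems(1) by simp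
    have "bit_of k (\<Sum>i<Suc n. c i * 2^i) = bit_of k (\<Sum>i<n. c i * 2^i)"
      unfolding eq by (rule bit_of_add_high)
    also have "\<dots> = c k" by (rule Suc.IH[OF c True])
    finally show ?thesis .
  next
    case False
    then have k: "k = n" using Suc.prems by simp
    have "(\<Sum>i<Suc n. c i * 2^i) div 2^n = ((\<Sum>i<n. c i * 2^i) + c n * 2^n) div 2^n" by simp
    also have "\<dots> = c n + (\<Sum>i<n. c i * 2^i) div 2^n" by (rule div_mult_self1) simp
    also have "\<dots> = c n" using lt by simp
    finally have "(\<Sum>i<Suc n. c i * 2^i) div 2^n = c n" .
    then show ?thesis using k Suc.prems(1)[of n] by (simp add: bit_of_def)
  qed
qed

lemma mod_bits: "j mod 2^i = (\<Sum>m<i. bit_of m j * 2^m)"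
  by (induction i) (simp_all add: mod_step[simplified] mult.commute)

lemma revp_alt: "revp n 0 j = (\<Sum>i<n. bit_of (n - 1 - i) j * 2^i)"
proof -
  have "revp n 0 j = (\<Sum>i=0..<n. bit_of (n - 1 - i) j * 2^(n - 1 - (n - 1 - i)))"
    unfolding revp_def by (subst sum.atLeastLessThan_rev) simp
  also have "\<dots> = (\<Sum>i<n. bit_of (n - 1 - i) j * 2^i)"
    by (intro sum.cong) auto
  finally show ?thesis .
qed

lemma bit_revp: "k < n \<Longrightarrow> bit_of k (revp n 0 j) = bit_of (n - 1 - k) j"
  unfolding revp_alt by (rule bit_of_sum) (simp_all add: bit_of_lt2)

lemma revp_lt: "revp n 0 j < 2^n"
  unfolding revp_alt by (rule sum_bits_lt) (simp add: bit_of_lt2)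

lemma revp_invol: "revp n 0 (revp n 0 j) = j mod 2^n"
proof -
  have "revp n 0 (revp n 0 j) = (\<Sum>i<n. bit_of (n - 1 - i) (revp n 0 j) * 2^i)" by (rule revp_alt)
  also have "\<dots> = (\<Sum>i<n. bit_of i j * 2^i)"
    by (intro sum.cong refl) (simp add: bit_revp)
  finally show ?thesis by (simp add: mod_bits)
qed

lemma bit_of_mod: "i < n \<Longrightarrow> bit_of i (j mod 2^n) = bit_of i j"
proof -
  assume "i < n"
  then obtain d where d: "n = Suc (i + d)" using less_iff_Suc_add by blast
  have p: "(2::nat)^n = 2^(Suc i) * 2^d" unfolding d by (simp add: power_add)
  have "j = j mod 2^n + 2^n * (j div 2^n)" by simp
  also have "\<dots> = j mod 2^n + 2^(Suc i) * (2^d * (j div 2^n))" unfolding p by (simp only: mult_ac)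
  finally have e: "j = j mod 2^n + 2^(Suc i) * (2^d * (j div 2^n))" .
  have "bit_of i j = bit_of i (j mod 2^n + 2^(Suc i) * (2^d * (j div 2^n)))" using e by simp
  then show ?thesis by (simp only: bit_of_add_high)
qed

lemma revp_mod: "revp n 0 (j mod 2^n) = revp n 0 j"
  unfolding revp_def by (intro sum.cong refl) (simp add: bit_of_mod)

lemma revp_inj: "s < 2^n \<Longrightarrow> revp n 0 s = revp n 0 j \<longleftrightarrow> s = j mod 2^n"
proof
  assume s: "s < 2^n" and "revp n 0 s = revp n 0 j"
  then have "revp n 0 (revp n 0 s) = revp n 0 (revp n 0 j)" by simp
  then show "s = j mod 2^n" using s by (simp add: revp_invol)
next
  assume "s = j mod 2^n"
  then show "revp n 0 s = revp n 0 j" by (simp add: revp_mod)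
qed


definition Finv :: "nat \<Rightarrow> (nat \<Rightarrow> complex) \<Rightarrow> nat \<Rightarrow> complex" where
  "Finv n u k = cq n * (\<Sum>s<2^n. wM (2^n) (- int ((k mod 2^n) * revp n 0 s)) * u (s + 2^n * (k div 2^n)))"

lemma cq_sq: "cq n * cq n * 2^n = 1"
proof -
  have "cq n * cq n = complex_of_real ((1/2)^n)"
    unfolding cq_def by (simp flip: of_real_mult power_mult_distrib)
  moreover have "complex_of_real ((1/2)^n) * 2^n = 1"
    by (simp add: power_one_over)
  ultimately show ?thesis by simp
qed

lemma dvd_diff_small: "a < M \<Longrightarrow> b < M \<Longrightarrow> int M dvd (int a - int b) \<longleftrightarrow> a = b"
proof
  assume a: "a < M" and b: "b < M" and d: "int M dvd (int a - int b)"
  show "a = b"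
  proof (rule ccontr)
    assume "a \<noteq> b"
    then have "int a - int b \<noteq> 0" by simp
    then have "\<bar>int M\<bar> \<le> \<bar>int a - int b\<bar>" using dvd_imp_le_int d by blast
    moreover have "\<bar>int a - int b\<bar> < int M" using a b by auto
    ultimately show False by simp
  qed
qed simp

lemma F_Finv: "run_circuit (qft n) (Finv n u) = u"
proof
  fix j
  define N :: nat where "N = 2^n"
  define h where "h = j div N"
  have N: "N > 0" by (simp add: N_def)
  have Fv: "Finv n u (t + N * h) = cq n * (\<Sum>s<N. wM N (- int (t * revp n 0 s)) * u (s + N * h))"
    if "t < N" for t
    using that N by (simp add: Finv_def N_def[symmetric])
  have "run_circuit (qft n) (Finv n u) j = cq n * (\<Sum>t<N. wM N (int (t * revp n 0 j)) * Finv n u (t + N * h))"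
    by (simp add: qft_sem N_def h_def)
  also have "\<dots> = cq n * (\<Sum>t<N. wM N (int (t * revp n 0 j)) * (cq n * (\<Sum>s<N. wM N (- int (t * revp n 0 s)) * u (s + N * h))))"
    by (intro arg_cong2[where f="(*)"] refl sum.cong) (simp_all add: Fv)
  also have "\<dots> = cq n * cq n * (\<Sum>s<N. (\<Sum>t<N. wM N ((int (revp n 0 j) - int (revp n 0 s)) * int t)) * u (s + N * h))"
  proof -
    define A where "A t = wM N (int (t * revp n 0 j))" for t
    define B where "B t s = wM N (- int (t * revp n 0 s))" for t s
    define E where "E s t = wM N ((int (revp n 0 j) - int (revp n 0 s)) * int t)" for s t
    define U where "U s = u (s + N * h)" for s
    have e: "A t * B t s = E s t" for t s
      unfolding A_def B_def E_def by (simp add: wM_add[symmetric] algebra_simps)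
    have "cq n * (\<Sum>t<N. A t * (cq n * (\<Sum>s<N. B t s * U s))) = cq n * cq n * (\<Sum>t<N. \<Sum>s<N. A t * B t s * U s)"
      by (simp add: sum_distrib_left mult_ac)
    also have "\<dots> = cq n * cq n * (\<Sum>s<N. \<Sum>t<N. E s t * U s)"
      by (subst sum.swap) (simp add: e)
    also have "\<dots> = cq n * cq n * (\<Sum>s<N. (\<Sum>t<N. E s t) * U s)"
      by (simp add: sum_distrib_right)
    finally show ?thesis unfolding A_def B_def E_def U_def .
  qed
  also have "\<dots> = cq n * cq n * (\<Sum>s<N. (if s = j mod N then of_nat N else 0) * u (s + N * h))"
  proof -
    have summ: "(\<Sum>t<N. wM N ((int (revp n 0 j) - int (revp n 0 s)) * int t)) = (if s = j mod N then of_nat N else 0)"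
      if s: "s < N" for s
    proof -
      have "(\<Sum>t<N. wM N ((int (revp n 0 j) - int (revp n 0 s)) * int t)) =
          (if int N dvd (int (revp n 0 j) - int (revp n 0 s)) then of_nat N else 0)"
        by (rule wM_sum[OF N])
      also have "\<dots> = (if s = j mod N then of_nat N else 0)"
        using dvd_diff_small[of "revp n 0 j" N "revp n 0 s"] revp_lt[of n] revp_inj[of s n j] s
        by (auto simp: N_def)
      finally show ?thesis .
    qed
    show ?thesis by (intro arg_cong2[where f="(*)"] refl sum.cong) (simp_all add: summ)
  qed
  also have "\<dots> = cq n * cq n * of_nat N * u (j mod N + N * h)"
  proof -
    have "(\<Sum>s<N. (if s = j mod N then of_nat N else 0) * u (s + N * h)) = (\<Sum>s<N. if s = j mod N then of_nat N * u (s + N * h) else 0)"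
      by (intro sum.cong) auto
    also have "\<dots> = of_nat N * u (j mod N + N * h)" using N by (simp add: sum.delta)
    finally show ?thesis by simp
  qed
  also have "\<dots> = u j" using cq_sq[of n] by (simp add: N_def h_def)
  finally show "run_circuit (qft n) (Finv n u) j = u j" .
qed

lemma iqft_sem: "run_circuit (iqft n) u = Finv n u"
proof -
  have "run_circuit (iqft n) u = run_circuit (iqft n) (run_circuit (qft n) (Finv n u))"
    by (simp add: F_Finv)
  also have "\<dots> = Finv n u" unfolding iqft_def by (rule adj_circuit[OF valid_qft])
  finally show ?thesis .
qed


definition mm :: "(nat \<Rightarrow> nat \<Rightarrow> complex) \<Rightarrow> (nat \<Rightarrow> nat \<Rightarrow> complex) \<Rightarrow> nat \<Rightarrow> nat \<Rightarrow> complex" where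
  "mm A B i j = (\<Sum>l<2. A i l * B l j)"

definition Sd :: "complex \<Rightarrow> nat \<Rightarrow> nat \<Rightarrow> complex" where
  "Sd z a b = (if a = b then (if a = 1 then z else 1) else 0)"

fun qsp :: "(nat \<Rightarrow> nat \<Rightarrow> complex) \<Rightarrow> (nat \<Rightarrow> nat \<Rightarrow> complex) list \<Rightarrow> complex \<Rightarrow> nat \<Rightarrow> nat \<Rightarrow> complex" where
  "qsp A0 [] z = A0"
| "qsp A0 (A # As) z = mm A (mm (Sd z) (qsp A0 As z))"

definition blk :: "nat \<Rightarrow> gate list \<Rightarrow> (nat \<Rightarrow> nat \<Rightarrow> nat \<Rightarrow> complex) \<Rightarrow> bool" where
  "blk n C W \<longleftrightarrow> (\<forall>v a r. a < 2 \<longrightarrow> r < 2^n \<longrightarrow>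
     run_circuit C v (r + 2^n * a) = (\<Sum>b<2. W r a b * v (r + 2^n * b)))"

definition ctrl :: "nat \<Rightarrow> gate list" where
  "ctrl n = map (\<lambda>i. Gate2 (cp (wM (2^n) (int (2^(n-1-i))))) i n) [0..<n]"

definition corr :: "nat \<Rightarrow> nat \<Rightarrow> gate list" where
  "corr n d = map (\<lambda>i. Gate1 (ph (wM (2^n) (- int d * int (2^(n-1-i))))) i) [0..<n]"

fun mid :: "nat \<Rightarrow> (nat \<Rightarrow> nat \<Rightarrow> complex) \<Rightarrow> (nat \<Rightarrow> nat \<Rightarrow> complex) list \<Rightarrow> gate list" where
  "mid n A0 [] = [Gate1 A0 n]"
| "mid n A0 (A # As) = mid n A0 As @ ctrl n @ [Gate1 A n]"

lemma idx_bit_n: "r < 2^n \<Longrightarrow> a < 2 \<Longrightarrow> bit_of n (r + 2^n * a) = a"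
  using cp_bit[of r n a 0] by simp

lemma idx_set_n: "r < 2^n \<Longrightarrow> a < 2 \<Longrightarrow> b < 2 \<Longrightarrow> set_bit_to n b (r + 2^n * a) = r + 2^n * b"
proof -
  assume r: "r < 2^n" and a: "a < 2" and b: "b < 2"
  have "(r + 2^n * a) div (2 * 2^n) = 0"
  proof -
    have "a \<le> 1" using a by simp
    then have "2^n * a \<le> 2^n * 1" by (rule mult_le_mono2)
    then have "r + 2^n * a < 2 * 2^n" using r by linarith
    then show ?thesis by simp
  qed
  then show ?thesis using set_bit_alt[OF b, of n "r + 2^n * a"] r by simp
qed

lemma idx_bit_low: "i < n \<Longrightarrow> r < 2^n \<Longrightarrow> bit_of i (r + 2^n * a) = bit_of i r"
  using bit_of_mod[of i n "r + 2^n * a"] by simp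

lemma idx_revp: "r < 2^n \<Longrightarrow> revp n 0 (r + 2^n * a) = revp n 0 r"
  using revp_mod[of n "r + 2^n * a"] by simp

lemma blk_cong: "blk n C W \<Longrightarrow> (\<And>r a b. r < 2^n \<Longrightarrow> a < 2 \<Longrightarrow> b < 2 \<Longrightarrow> W r a b = W' r a b) \<Longrightarrow> blk n C W'"
  unfolding blk_def by (metis (no_types, lifting) lessThan_iff sum.cong)

lemma blk_append: "blk n C1 W1 \<Longrightarrow> blk n C2 W2 \<Longrightarrow> blk n (C1 @ C2) (\<lambda>r. mm (W2 r) (W1 r))"
  unfolding blk_def
proof (intro allI impI)
  fix v and a r :: nat assume B1: "\<forall>v a r. a < 2 \<longrightarrow> r < 2 ^ n \<longrightarrow> run_circuit C1 v (r + 2 ^ n * a) = (\<Sum>b<2. W1 r a b * v (r + 2 ^ n * b))"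
    and B2: "\<forall>v a r. a < 2 \<longrightarrow> r < 2 ^ n \<longrightarrow> run_circuit C2 v (r + 2 ^ n * a) = (\<Sum>b<2. W2 r a b * v (r + 2 ^ n * b))"
    and a: "a < 2" and r: "r < 2^n"
  have "run_circuit (C1 @ C2) v (r + 2^n * a) = (\<Sum>b<2. W2 r a b * run_circuit C1 v (r + 2^n * b))"
    using B2 a r by (simp add: run_append)
  also have "\<dots> = (\<Sum>b<2. W2 r a b * (\<Sum>c<2. W1 r b c * v (r + 2 ^ n * c)))"
    using B1 r by (intro sum.cong refl) simp
  also have "\<dots> = (\<Sum>c<2. mm (W2 r) (W1 r) a c * v (r + 2^n * c))"
    by (simp add: mm_def sum2 algebra_simps)
  finally show "run_circuit (C1 @ C2) v (r + 2^n * a) = (\<Sum>c<2. mm (W2 r) (W1 r) a c * v (r + 2^n * c))" .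
qed

lemma blk_gate_anc: "blk n [Gate1 A n] (\<lambda>r. A)"
  unfolding blk_def
proof (intro allI impI)
  fix v and a r :: nat assume a: "a < (2::nat)" and r: "r < 2^n"
  show "run_circuit [Gate1 A n] v (r + 2^n * a) = (\<Sum>b<2. A a b * v (r + 2^n * b))"
    using a r by (simp add: run_Cons idx_bit_n idx_set_n sum2)
qed

lemma blk_diag: "(\<And>v j. run_circuit C v j = f j * v j) \<Longrightarrow> blk n C (\<lambda>r a b. if a = b then f (r + 2^n * a) else 0)"
  unfolding blk_def
proof (intro allI impI)
  fix v and a r :: nat assume h: "\<And>v j. run_circuit C v j = f j * v j" and a: "a < (2::nat)" and r: "r < 2^n"
  have "a = 0 \<or> a = 1" using a by auto
  then show "run_circuit C v (r + 2^n * a) = (\<Sum>b<2. (if a = b then f (r + 2^n * a) else 0) * v (r + 2^n * b))"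
    using h by (elim disjE) (simp_all add: sum2)
qed

lemma ctrl_diag: "k \<le> n \<Longrightarrow> run_circuit (map (\<lambda>i. Gate2 (cp (wM (2^n) (int (2^(n-1-i))))) i n) [0..<k]) v j =
   (if bit_of n j = 1 then wM (2^n) (int (\<Sum>i<k. bit_of i j * 2^(n-1-i))) else 1) * v j"
proof (induction k arbitrary: v)
  case 0 then show ?case by simp
next
  case (Suc k)
  have "run_circuit (map (\<lambda>i. Gate2 (cp (wM (2^n) (int (2^(n-1-i))))) i n) [0..<Suc k]) v j =
     apply_gate (Gate2 (cp (wM (2^n) (int (2^(n-1-k))))) k n) (run_circuit (map (\<lambda>i. Gate2 (cp (wM (2^n) (int (2^(n-1-i))))) i n) [0..<k]) v) j"
    by (simp add: run_append run_Cons)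
  also have "\<dots> = (if bit_of k j = 1 \<and> bit_of n j = 1 then wM (2^n) (int (2^(n-1-k))) else 1) *
     ((if bit_of n j = 1 then wM (2^n) (int (\<Sum>i<k. bit_of i j * 2^(n-1-i))) else 1) * v j)"
  proof -
    have kn: "k \<le> n" using Suc.prems by simp
    show ?thesis by (simp only: apply_cp Suc.IH[OF kn])
  qed
  also have "\<dots> = (if bit_of n j = 1 then wM (2^n) (int (\<Sum>i<Suc k. bit_of i j * 2^(n-1-i))) else 1) * v j"
  proof -
    have "bit_of k j = 0 \<or> bit_of k j = 1" using bit_of_lt2 less2_cases by blast
    then show ?thesis by (elim disjE) (simp_all add: wM_add mult_ac)
  qed
  finally show ?case .
qed

lemma revp_sum: "revp n 0 j = (\<Sum>i<n. bit_of i j * 2^(n-1-i))"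
  by (simp add: revp_def atLeast0LessThan)

lemma blk_ctrl: "blk n (ctrl n) (\<lambda>r. Sd (wM (2^n) (int (revp n 0 r))))"
proof (rule blk_cong[OF blk_diag])
  show "run_circuit (ctrl n) v j = (if bit_of n j = 1 then wM (2^n) (int (revp n 0 j)) else 1) * v j" for v j
    using ctrl_diag[of n n v j] by (simp add: ctrl_def revp_sum)
next
  fix r a b :: nat assume r: "r < 2^n" and a: "a < 2" and b: "b < 2"
  show "(if a = b then (if bit_of n (r + 2^n * a) = 1 then wM (2^n) (int (revp n 0 (r + 2^n * a))) else 1) else 0)
     = Sd (wM (2^n) (int (revp n 0 r))) a b"
    unfolding idx_bit_n[OF r a] idx_revp[OF r] Sd_def by simp
qed

lemma corr_diag: "run_circuit (map (\<lambda>i. Gate1 (ph (wM (2^n) (- int d * int (2^(n-1-i))))) i) [0..<k]) v j =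
   wM (2^n) (- int d * int (\<Sum>i<k. bit_of i j * 2^(n-1-i))) * v j"
proof (induction k arbitrary: v)
  case 0 then show ?case by simp
next
  case (Suc k)
  have "run_circuit (map (\<lambda>i. Gate1 (ph (wM (2^n) (- int d * int (2^(n-1-i))))) i) [0..<Suc k]) v j =
     apply_gate (Gate1 (ph (wM (2^n) (- int d * int (2^(n-1-k))))) k) (run_circuit (map (\<lambda>i. Gate1 (ph (wM (2^n) (- int d * int (2^(n-1-i))))) i) [0..<k]) v) j"
    by (simp add: run_append run_Cons)
  also have "\<dots> = (if bit_of k j = 1 then wM (2^n) (- int d * int (2^(n-1-k))) else 1) *
     (wM (2^n) (- int d * int (\<Sum>i<k. bit_of i j * 2^(n-1-i))) * v j)"
    by (simp only: apply_ph Suc.IH)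
  also have "\<dots> = wM (2^n) (- int d * int (\<Sum>i<Suc k. bit_of i j * 2^(n-1-i))) * v j"
  proof -
    have "bit_of k j = 0 \<or> bit_of k j = 1" using bit_of_lt2 less2_cases by blast
    then show ?thesis by (elim disjE) (simp_all add: wM_add[symmetric] algebra_simps)
  qed
  finally show ?case .
qed

lemma blk_corr: "blk n (corr n d) (\<lambda>r a b. if a = b then wM (2^n) (- int d * int (revp n 0 r)) else 0)"
proof (rule blk_cong[OF blk_diag])
  show "run_circuit (corr n d) v j = wM (2^n) (- int d * int (revp n 0 j)) * v j" for v j
    using corr_diag[of n d n v j] by (simp add: corr_def revp_sum)
next
  fix r a b :: nat assume r: "r < 2^n" and a: "a < 2" and b: "b < 2"
  show "(if a = b then wM (2^n) (- int d * int (revp n 0 (r + 2^n * a))) else 0)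
     = (if a = b then wM (2^n) (- int d * int (revp n 0 r)) else 0)"
    using r by (simp add: idx_revp)
qed

lemma blk_mid: "blk n (mid n A0 As) (\<lambda>r. qsp A0 As (wM (2^n) (int (revp n 0 r))))"
proof (induction As)
  case Nil then show ?case by (simp add: blk_gate_anc)
next
  case (Cons A As)
  have "blk n ((mid n A0 As @ ctrl n) @ [Gate1 A n])
     (\<lambda>r. mm A (mm (Sd (wM (2^n) (int (revp n 0 r)))) (qsp A0 As (wM (2^n) (int (revp n 0 r))))))"
    by (rule blk_append[OF blk_append[OF Cons blk_ctrl] blk_gate_anc])
  then show ?case by simp
qed

lemma length_ctrl: "length (ctrl n) = n" by (simp add: ctrl_def)
lemma length_corr: "length (corr n d) = n" by (simp add: corr_def)
lemma length_mid: "length (mid n A0 As) = 1 + length As * (n + 1)"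
  by (induction As) (simp_all add: length_ctrl)

lemma valid_ctrl: "circuit_valid (n + 1) (ctrl n)"
  by (auto simp: circuit_valid_def ctrl_def unitary_cp)
lemma valid_corr: "circuit_valid (n + 1) (corr n d)"
  by (auto simp: circuit_valid_def corr_def unitary_ph)
lemma valid_mid: "unitary_mat 2 A0 \<Longrightarrow> (\<forall>A\<in>set As. unitary_mat 2 A) \<Longrightarrow> circuit_valid (n + 1) (mid n A0 As)"
  using valid_ctrl[of n] unfolding circuit_valid_def by (induction As) auto


definition circ :: "nat \<Rightarrow> nat \<Rightarrow> (nat \<Rightarrow> nat \<Rightarrow> complex) \<Rightarrow> (nat \<Rightarrow> nat \<Rightarrow> complex) list \<Rightarrow> gate list" where
  "circ n d A0 As = qft n @ (mid n A0 As @ corr n d) @ iqft n"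

lemma sum_revp: "(\<Sum>s<2^n. f (revp n 0 s)) = (\<Sum>y<2^n. f y)"
  by (rule sum.reindex_bij_witness[where i="revp n 0" and j="revp n 0"])
     (auto simp: revp_invol revp_lt)

lemma pick: "(\<Sum>t<N. (if int N dvd (k + int t - int m) then x t else 0)) = x (nat ((int m - k) mod int N))"
  if N: "N > 0" for x :: "nat \<Rightarrow> complex"
proof -
  have iff: "int N dvd (k + int t - int m) \<longleftrightarrow> t = nat ((int m - k) mod int N)" if t: "t < N" for t
  proof -
    have "int N dvd (k + int t - int m) \<longleftrightarrow> int N dvd (int t - (int m - k))" by (simp add: algebra_simps)
    also have "\<dots> \<longleftrightarrow> int t mod int N = (int m - k) mod int N" by (simp add: mod_eq_dvd_iff)
    also have "int t mod int N = int t" using t by simp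
    also have "int t = (int m - k) mod int N \<longleftrightarrow> t = nat ((int m - k) mod int N)"
      using N by auto
    finally show ?thesis .
  qed
  have "(\<Sum>t<N. (if int N dvd (k + int t - int m) then x t else 0)) = (\<Sum>t<N. (if t = nat ((int m - k) mod int N) then x t else 0))"
    by (intro sum.cong refl) (simp add: iff)
  also have "\<dots> = x (nat ((int m - k) mod int N))"
  proof -
    have "nat ((int m - k) mod int N) < N" using N by (simp add: nat_less_iff)
    then show ?thesis by (simp add: sum.delta)
  qed
  finally show ?thesis .
qed

lemma swap3: "(\<Sum>s\<in>A. \<Sum>t\<in>B. \<Sum>k\<in>C. f s t k) = (\<Sum>k\<in>C. \<Sum>t\<in>B. \<Sum>s\<in>A. f s t k)"
proof -
  have "(\<Sum>s\<in>A. \<Sum>t\<in>B. \<Sum>k\<in>C. f s t k) = (\<Sum>s\<in>A. \<Sum>k\<in>C. \<Sum>t\<in>B. f s t k)"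
    by (intro sum.cong refl) (rule sum.swap)
  also have "\<dots> = (\<Sum>k\<in>C. \<Sum>s\<in>A. \<Sum>t\<in>B. f s t k)" by (rule sum.swap)
  also have "\<dots> = (\<Sum>k\<in>C. \<Sum>t\<in>B. \<Sum>s\<in>A. f s t k)"
    by (intro sum.cong refl) (rule sum.swap)
  finally show ?thesis .
qed

lemma circ_correct:
  assumes Q: "\<And>r. r < 2^n \<Longrightarrow> qsp A0 As (wM (2^n) (int (revp n 0 r))) 0 0 =
      s0 * wM (2^n) (int d * int (revp n 0 r)) * (\<Sum>k\<in>{-int d..int d}. a k * wM (2^n) (k * int (revp n 0 r)))"
    and m: "m < 2^n"
  shows "run_circuit (circ n d A0 As) (\<lambda>j. if j < 2^n then x j else 0) m = s0 * conv (2^n) d a x m"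
proof -
  define N :: nat where "N = 2^n"
  have N: "N > 0" by (simp add: N_def)
  define R where "R s = revp n 0 s" for s
  define x0 where "x0 = (\<lambda>j. if j < 2^n then x j else 0)"
  define y1 where "y1 = run_circuit (qft n) x0"
  define y2 where "y2 = run_circuit (mid n A0 As @ corr n d) y1"
  define Qs where "Qs s = qsp A0 As (wM N (int (R s)))" for s
  define K where "K = {-int d..int d}"
  have blk2: "blk n (mid n A0 As @ corr n d) (\<lambda>r. mm (\<lambda>a b. if a = b then wM (2^n) (- int d * int (revp n 0 r)) else 0) (qsp A0 As (wM (2^n) (int (revp n 0 r)))))"
    by (rule blk_append[OF blk_mid blk_corr])
  have y1_1: "y1 (s + N) = 0" if s: "s < N" for s
  proof -
    have "(s + N) div N = 1" using s by simp
    then show ?thesis using s by (simp add: y1_def qft_sem x0_def N_def[symmetric])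
  qed
  have y1_0: "y1 s = cq n * (\<Sum>t<N. wM N (int (t * R s)) * x t)" if s: "s < N" for s
  proof -
    have "y1 s = cq n * (\<Sum>t<N. wM N (int (t * R s)) * x0 t)"
      using s by (simp add: y1_def qft_sem N_def[symmetric] R_def)
    also have "\<dots> = cq n * (\<Sum>t<N. wM N (int (t * R s)) * x t)"
      by (intro arg_cong2[where f="(*)"] refl sum.cong) (simp_all add: x0_def N_def)
    finally show ?thesis .
  qed
  have y2_0: "y2 s = s0 * (\<Sum>k\<in>K. a k * wM N (k * int (R s))) * (cq n * (\<Sum>t<N. wM N (int (t * R s)) * x t))"
    if s: "s < N" for s
  proof -
    have "y2 (s + 2^n * 0) = (\<Sum>b<2. mm (\<lambda>a b. if a = b then wM (2^n) (- int d * int (revp n 0 s)) else 0) (qsp A0 As (wM (2^n) (int (revp n 0 s)))) 0 b * y1 (s + 2^n * b))"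
    proof -
      have s': "s < 2^n" using s by (simp add: N_def)
      have zz: "(0::nat) < 2" by simp
      show ?thesis unfolding y2_def by (rule blk2[unfolded blk_def, rule_format, OF zz s'])
    qed
    then have "y2 s = wM N (- int d * int (R s)) * Qs s 0 0 * y1 s"
      using y1_1[OF s] by (simp add: sum2 mm_def N_def R_def Qs_def)
    also have "Qs s 0 0 = s0 * wM N (int d * int (R s)) * (\<Sum>k\<in>K. a k * wM N (k * int (R s)))"
      using Q s by (simp add: Qs_def N_def R_def K_def)
    also have "wM N (- int d * int (R s)) * (s0 * wM N (int d * int (R s)) * (\<Sum>k\<in>K. a k * wM N (k * int (R s))))
        = s0 * (\<Sum>k\<in>K. a k * wM N (k * int (R s)))"
    proof -
      have "wM N (- int d * int (R s)) * wM N (int d * int (R s)) = 1" by (simp add: wM_add[symmetric])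
      then show ?thesis by (simp add: mult_ac)
    qed
    finally show ?thesis using y1_0[OF s] by simp
  qed
  have "run_circuit (circ n d A0 As) x0 m = Finv n y2 m"
    by (simp add: circ_def run_append iqft_sem y1_def y2_def)
  also have "\<dots> = cq n * (\<Sum>s<N. wM N (- int (m * R s)) * y2 s)"
    using m by (simp add: Finv_def N_def R_def)
  also have "\<dots> = cq n * (\<Sum>s<N. wM N (- int (m * R s)) * (s0 * (\<Sum>k\<in>K. a k * wM N (k * int (R s))) * (cq n * (\<Sum>t<N. wM N (int (t * R s)) * x t))))"
    by (intro arg_cong2[where f="(*)"] refl sum.cong) (simp_all add: y2_0)
  also have "\<dots> = cq n * cq n * s0 * (\<Sum>k\<in>K. \<Sum>t<N. a k * x t * (\<Sum>s<N. wM N ((k + int t - int m) * int (R s))))"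
  proof -
    define E where "E k t s = wM N ((k + int t - int m) * int (R s))" for k t s
    have e: "wM N (- int (m * R s)) * wM N (k * int (R s)) * wM N (int (t * R s)) = E k t s" for k t s
      unfolding E_def by (simp add: wM_add[symmetric] algebra_simps)
    have "cq n * (\<Sum>s<N. wM N (- int (m * R s)) * (s0 * (\<Sum>k\<in>K. a k * wM N (k * int (R s))) * (cq n * (\<Sum>t<N. wM N (int (t * R s)) * x t))))
       = cq n * cq n * s0 * (\<Sum>s<N. \<Sum>t<N. \<Sum>k\<in>K. a k * x t * (wM N (- int (m * R s)) * wM N (k * int (R s)) * wM N (int (t * R s))))"
      by (simp add: sum_distrib_left sum_distrib_right mult_ac)
    also have "\<dots> = cq n * cq n * s0 * (\<Sum>s<N. \<Sum>t<N. \<Sum>k\<in>K. a k * x t * E k t s)"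
      by (simp only: e)
    also have "\<dots> = cq n * cq n * s0 * (\<Sum>k\<in>K. \<Sum>t<N. \<Sum>s<N. a k * x t * E k t s)"
      by (subst swap3) (rule refl)
    also have "\<dots> = cq n * cq n * s0 * (\<Sum>k\<in>K. \<Sum>t<N. a k * x t * (\<Sum>s<N. E k t s))"
      by (simp only: sum_distrib_left)
    finally show ?thesis unfolding E_def .
  qed
  also have "\<dots> = cq n * cq n * s0 * (\<Sum>k\<in>K. \<Sum>t<N. a k * x t * (if int N dvd (k + int t - int m) then of_nat N else 0))"
  proof -
    have "(\<Sum>s<N. wM N ((k + int t - int m) * int (R s))) = (if int N dvd (k + int t - int m) then of_nat N else 0)" for k t
    proof -
      have "(\<Sum>s<N. wM N ((k + int t - int m) * int (R s))) = (\<Sum>y<N. wM N ((k + int t - int m) * int y))"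
        unfolding R_def N_def by (rule sum_revp)
      also have "\<dots> = (if int N dvd (k + int t - int m) then of_nat N else 0)" by (rule wM_sum[OF N])
      finally show ?thesis .
    qed
    then show ?thesis by simp
  qed
  also have "\<dots> = cq n * cq n * of_nat N * s0 * (\<Sum>k\<in>K. a k * (\<Sum>t<N. (if int N dvd (k + int t - int m) then x t else 0)))"
  proof -
    define P where "P k t = (int N dvd (k + int t - int m))" for k t
    have t: "a k * x t * (if P k t then of_nat N else 0) = of_nat N * (a k * (if P k t then x t else 0))" for k t
      by simp
    have "(\<Sum>k\<in>K. \<Sum>t<N. a k * x t * (if P k t then of_nat N else 0)) = (\<Sum>k\<in>K. \<Sum>t<N. of_nat N * (a k * (if P k t then x t else 0)))"
      by (simp only: t)
    also have "\<dots> = of_nat N * (\<Sum>k\<in>K. a k * (\<Sum>t<N. (if P k t then x t else 0)))"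
      by (simp only: sum_distrib_left)
    finally have "cq n * cq n * s0 * (\<Sum>k\<in>K. \<Sum>t<N. a k * x t * (if P k t then of_nat N else 0)) =
       cq n * cq n * of_nat N * s0 * (\<Sum>k\<in>K. a k * (\<Sum>t<N. (if P k t then x t else 0)))"
      by (simp only: mult_ac)
    then show ?thesis unfolding P_def .
  qed
  also have "\<dots> = s0 * (\<Sum>k\<in>K. a k * x (nat ((int m - k) mod int N)))"
  proof -
    have "(\<Sum>k\<in>K. a k * (\<Sum>t<N. (if int N dvd (k + int t - int m) then x t else 0))) = (\<Sum>k\<in>K. a k * x (nat ((int m - k) mod int N)))"
      by (simp only: pick[OF N])
    moreover have "cq n * cq n * of_nat N = 1" using cq_sq[of n] by (simp add: N_def)
    ultimately show ?thesis by simp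
  qed
  finally show ?thesis unfolding x0_def conv_def K_def N_def .
qed


definition rpoly :: "nat \<Rightarrow> complex poly \<Rightarrow> complex poly" where
  "rpoly D p = (\<Sum>k\<le>D. monom (cnj (coeff p (D - k))) k)"

lemma poly_le: "degree (p::complex poly) \<le> D \<Longrightarrow> poly p x = (\<Sum>i\<le>D. coeff p i * x ^ i)"
proof -
  assume "degree p \<le> D"
  then have "poly p x = poly (\<Sum>i\<le>D. monom (coeff p i) i) x" by (simp add: poly_as_sum_of_monoms')
  then show ?thesis by (simp add: poly_sum poly_monom)
qed

lemma coeff_rpoly: "coeff (rpoly D p) i = (if i \<le> D then cnj (coeff p (D - i)) else 0)"
  unfolding rpoly_def coeff_sum coeff_monom by (simp add: sum.delta')

lemma degree_rpoly: "degree (rpoly D p) \<le> D"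
  by (rule degree_le) (simp add: coeff_rpoly)

lemma poly_rpoly: "degree p \<le> D \<Longrightarrow> x \<noteq> 0 \<Longrightarrow> poly (rpoly D p) x = x^D * cnj (poly p (1 / cnj x))"
proof -
  assume d: "degree p \<le> D" and x: "x \<noteq> 0"
  have "poly (rpoly D p) x = (\<Sum>k\<le>D. cnj (coeff p (D - k)) * x^k)"
    unfolding rpoly_def by (simp add: poly_sum poly_monom)
  also have "\<dots> = (\<Sum>i\<le>D. cnj (coeff p i) * x^(D - i))"
    by (subst (2) atLeast0AtMost[symmetric], subst sum.atLeastAtMost_rev) (simp add: atLeast0AtMost)
  also have "\<dots> = (\<Sum>i\<le>D. x^D * (cnj (coeff p i) * (1/x)^i))"
  proof (intro sum.cong refl)
    fix i assume "i \<in> {..D}"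
    then have "x^D = x^(D-i) * x^i" by (simp add: power_add[symmetric])
    then show "cnj (coeff p i) * x^(D - i) = x^D * (cnj (coeff p i) * (1/x)^i)"
      using x by (simp add: power_one_over field_simps)
  qed
  also have "\<dots> = x^D * cnj (poly p (1 / cnj x))"
    using d by (simp add: poly_le sum_distrib_left)
  finally show ?thesis .
qed

lemma cnj_circ: "cmod z = 1 \<Longrightarrow> 1 / cnj z = z"
proof -
  assume "cmod z = 1"
  then have "z * cnj z = 1" by (metis complex_norm_square mult.commute norm1_cnj of_real_1 one_power2)
  then show ?thesis by (metis divide_eq_eq mult.commute one_neq_zero zero_neq_one mult_zero_left complex_cnj_zero_iff)
qed

lemma circ_eq: "(\<And>z. cmod z = 1 \<Longrightarrow> poly p z = poly q z) \<Longrightarrow> p = (q :: complex poly)"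
proof -
  assume h: "\<And>z. cmod z = 1 \<Longrightarrow> poly p z = poly q z"
  define M where "M = Suc (max (degree p) (degree q))"
  define A where "A = (\<lambda>k. wM M (int k)) ` {..<M}"
  have M: "M > 0" by (simp add: M_def)
  have "card A = M" unfolding A_def using card_image[OF wM_inj[OF M]] by simp
  then show ?thesis
    by (intro poly_eqI_degree[where A=A]) (auto simp: A_def M_def h)
qed


lemma zcnj: "cmod z = 1 \<Longrightarrow> z * cnj z = 1"
  by (metis complex_norm_square mult.commute norm1_cnj of_real_1 one_power2)

lemma recip:
  assumes d: "degree h \<le> 2*D" and r: "\<forall>z. cmod z = 1 \<longrightarrow> (\<exists>r::real. poly h z = of_real r * z^D)"
  shows "rpoly (2*D) h = h"
proof (rule circ_eq)
  fix z :: complex assume z: "cmod z = 1"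
  then have z0: "z \<noteq> 0" by auto
  obtain rr :: real where rr: "poly h z = of_real rr * z^D" using r z by blast
  have zc: "z * cnj z = 1" by (rule zcnj[OF z])
  have "poly (rpoly (2*D) h) z = z^(2*D) * cnj (poly h z)"
    using poly_rpoly[OF d z0] cnj_circ[OF z] by simp
  also have "\<dots> = of_real rr * z^D * (z * cnj z)^D"
  proof -
    have e: "z^(2*D) = z^D * z^D" by (simp add: mult_2 power_add)
    have e2: "z^(D*2) = z^D * z^D" by (simp add: mult_2_right power_add)
    show ?thesis by (simp add: rr e e2 power_mult_distrib mult_ac)
  qed
  also have "\<dots> = poly h z" using zc rr by simp
  finally show "poly (rpoly (2*D) h) z = poly h z" .
qed

lemma circ_factor: "z * cnj z = 1 \<Longrightarrow> c \<noteq> 0 \<Longrightarrow>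
  (z - c) * (z - 1 / cnj c) = - (of_real ((cmod (z - c))^2)) * z / cnj c"
proof -
  assume zc: "z * cnj z = 1" and c: "c \<noteq> 0"
  have cc: "cnj c \<noteq> 0" using c by simp
  have n: "of_real ((cmod (z - c))^2) = (z - c) * cnj (z - c)" by (rule complex_norm_square)
  have "- (of_real ((cmod (z - c))^2)) * z / cnj c = - ((z - c) * (cnj z - cnj c)) * z / cnj c"
    unfolding n by simp
  also have "\<dots> = (z - c) * (- (z * cnj z - z * cnj c)) / cnj c" by (simp add: algebra_simps)
  also have "\<dots> = (z - c) * (z * cnj c - 1) / cnj c" using zc by simp
  also have "\<dots> = (z - c) * (z - 1 / cnj c)" using cc by (simp add: field_simps)
  finally show ?thesis by simp
qed

lemma fejer_riesz:
  "degree h \<le> 2*D \<Longrightarrow> (\<forall>z. cmod z = 1 \<longrightarrow> (\<exists>r::real. r > 0 \<and> poly h z = of_real r * z^D)) \<Longrightarrow>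
   \<exists>q. degree q \<le> D \<and> (\<forall>z. cmod z = 1 \<longrightarrow> poly h z = of_real ((cmod (poly q z))^2) * z^D)"
proof (induction D arbitrary: h)
  case 0
  then have dh: "degree h = 0" by simp
  have ph: "poly h z = coeff h 0" for z using poly_le[of h 0 z] dh by simp
  obtain r :: real where r0: "r > 0" "poly h 1 = of_real r * 1^0" using "0.prems"(2)[rule_format, of 1] by auto
  then have r: "r > 0" "poly h 1 = of_real r" by simp_all
  define q where "q = [: complex_of_real (sqrt r) :]"
  have "poly h z = of_real ((cmod (poly q z))^2) * z^0" for z
    using r ph[of z] ph[of 1] by (simp add: q_def norm_of_real)
  moreover have "degree q \<le> 0" by (simp add: q_def)
  ultimately show ?case by blast
next
  case (Suc D)
  have dh: "degree h \<le> 2 * Suc D" using Suc.prems(1) .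
  have pos: "\<forall>z. cmod z = 1 \<longrightarrow> (\<exists>r::real. r > 0 \<and> poly h z = of_real r * z^Suc D)" using Suc.prems(2) .
  have RC: "rpoly (2 * Suc D) h = h"
    by (rule recip[OF dh]) (use pos in blast)
  have coef_top: "coeff h (2 * Suc D) = cnj (coeff h 0)"
    using coeff_rpoly[of "2 * Suc D" h "2 * Suc D"] RC by simp
  show ?case
  proof (cases "coeff h 0 = 0")
    case True
    then have top0: "coeff h (2 * Suc D) = 0" using coef_top by simp
    have dh': "degree h \<le> 2 * D + 1"
    proof (rule degree_le, intro allI impI)
      fix i assume "2 * D + 1 < i"
      then have "i = 2 * Suc D \<or> i > 2 * Suc D" by auto
      then show "coeff h i = 0" using top0 dh by (auto simp: coeff_eq_0)
    qed
    obtain a h1 where h: "h = pCons a h1" by (cases h)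
    have a: "a = 0" using True h by simp
    have dh1: "degree h1 \<le> 2 * D"
    proof (cases "h1 = 0")
      case False
      then have "degree h = Suc (degree h1)" using h by (simp add: degree_pCons_eq)
      then show ?thesis using dh' by simp
    qed simp
    have pos1: "\<forall>z. cmod z = 1 \<longrightarrow> (\<exists>r::real. r > 0 \<and> poly h1 z = of_real r * z^D)"
    proof (intro allI impI)
      fix z :: complex assume z: "cmod z = 1"
      then have z0: "z \<noteq> 0" by auto
      obtain r :: real where r: "r > 0" "poly h z = of_real r * z^Suc D" using pos z by blast
      then have "z * poly h1 z = z * (of_real r * z^D)" using h a by (simp add: mult_ac)
      then have "poly h1 z = of_real r * z^D" using z0 by simp
      then show "\<exists>r::real. r > 0 \<and> poly h1 z = of_real r * z^D" using r(1) by blast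
    qed
    obtain q where q: "degree q \<le> D" "\<forall>z. cmod z = 1 \<longrightarrow> poly h1 z = of_real ((cmod (poly q z))^2) * z^D"
      using Suc.IH[OF dh1 pos1] by blast
    have "poly h z = of_real ((cmod (poly q z))^2) * z^Suc D" if z: "cmod z = 1" for z
      using q(2) z h a by (simp add: mult_ac)
    moreover have "degree q \<le> Suc D" using q(1) by simp
    ultimately show ?thesis by blast
  next
    case False
    have h0: "h \<noteq> 0" using False by auto
    have "coeff h (2 * Suc D) \<noteq> 0" using coef_top False by simp
    then have dge: "2 * Suc D \<le> degree h" by (rule le_degree)
    have "\<not> (\<exists>a l. a \<noteq> 0 \<and> l = 0 \<and> h = pCons a l)"
    proof
      assume "\<exists>a l. a \<noteq> 0 \<and> l = 0 \<and> h = pCons a l"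
      then obtain a where "h = pCons a 0" by blast
      then have "degree h = 0" by simp
      then show False using dge by simp
    qed
    then obtain \<rho> where rho: "poly h \<rho> = 0" using fundamental_theorem_of_algebra_alt by blast
    have rho0: "\<rho> \<noteq> 0" using rho False by (auto simp: poly_0_coeff_0)
    have rho1: "cmod \<rho> \<noteq> 1"
    proof
      assume "cmod \<rho> = 1"
      then obtain r :: real where "r > 0" "poly h \<rho> = of_real r * \<rho>^Suc D" using pos by blast
      then show False using rho rho0 by simp
    qed
    define \<sigma> where "\<sigma> = 1 / cnj \<rho>"
    have sig0: "\<sigma> \<noteq> 0" using rho0 by (simp add: \<sigma>_def)
    have "poly h \<sigma> = poly (rpoly (2 * Suc D) h) \<sigma>" using RC by simp
    also have "\<dots> = \<sigma>^(2 * Suc D) * cnj (poly h (1 / cnj \<sigma>))" by (rule poly_rpoly[OF dh sig0])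
    also have "1 / cnj \<sigma> = \<rho>" by (simp add: \<sigma>_def)
    finally have sig: "poly h \<sigma> = 0" using rho by simp
    have sr: "\<sigma> \<noteq> \<rho>"
    proof
      assume e: "\<sigma> = \<rho>"
      then have "\<rho> * cnj \<rho> = 1" using rho0 by (simp add: \<sigma>_def field_simps)
      then have "of_real ((cmod \<rho>)^2) = (1::complex)" using complex_norm_square[of \<rho>] by simp
      then have "(cmod \<rho>)^2 = 1" by (metis of_real_eq_1_iff)
      then show False using rho1 norm_ge_zero[of \<rho>] by (simp add: power2_eq_1_iff)
    qed
    obtain g1 where g1: "h = [:-\<rho>, 1:] * g1" using rho by (auto simp: poly_eq_0_iff_dvd elim: dvdE)
    have "poly g1 \<sigma> = 0" using sig sr g1 by simp
    then obtain g2 where g2: "g1 = [:-\<sigma>, 1:] * g2" by (auto simp: poly_eq_0_iff_dvd elim: dvdE)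
    have g10: "g1 \<noteq> 0" and g20: "g2 \<noteq> 0" using h0 g1 g2 by auto
    have l1: "degree [:-\<rho>, 1:] = 1" "degree [:-\<sigma>, 1:] = 1" by simp_all
    have "degree h = 1 + degree g1"
      using degree_mult_eq[of "[:-\<rho>, 1:]" g1] g10 g1 l1 by simp
    moreover have "degree g1 = 1 + degree g2"
      using degree_mult_eq[of "[:-\<sigma>, 1:]" g2] g20 g2 l1 by simp
    ultimately have "degree h = Suc (Suc (degree g2))" by simp
    then have dg2: "degree g2 \<le> 2 * D" using dh by simp
    define h3 where "h3 = smult (- 1 / cnj \<rho>) g2"
    have dh3: "degree h3 \<le> 2 * D" using dg2 degree_smult_le[of _ g2] by (metis h3_def order_trans)
    have hfac: "poly h z = of_real ((cmod (z - \<rho>))^2) * z * poly h3 z" if z: "cmod z = 1" for z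
    proof -
      have "poly h z = poly [:-\<rho>, 1:] z * (poly [:-\<sigma>, 1:] z * poly g2 z)"
        unfolding g1 g2 by (simp only: poly_mult)
      also have "\<dots> = (z - \<rho>) * (z - \<sigma>) * poly g2 z" by simp
      finally have "poly h z = (z - \<rho>) * (z - \<sigma>) * poly g2 z" .
      moreover have "(z - \<rho>) * (z - \<sigma>) = - (of_real ((cmod (z - \<rho>))^2)) * z / cnj \<rho>"
        unfolding \<sigma>_def by (rule circ_factor[OF zcnj[OF z] rho0])
      ultimately show ?thesis by (simp add: h3_def mult_ac)
    qed
    have pos3: "\<forall>z. cmod z = 1 \<longrightarrow> (\<exists>r::real. r > 0 \<and> poly h3 z = of_real r * z^D)"
    proof (intro allI impI)
      fix z :: complex assume z: "cmod z = 1"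
      then have z0: "z \<noteq> 0" by auto
      have zr: "z \<noteq> \<rho>" using z rho1 by auto
      then have m: "(cmod (z - \<rho>))^2 > 0" by simp
      obtain r :: real where r: "r > 0" "poly h z = of_real r * z^Suc D" using pos z by blast
      define a where "a = complex_of_real ((cmod (z - \<rho>))^2)"
      have M: "a \<noteq> 0" using m by (simp add: a_def)
      have E0: "a * z * poly h3 z = of_real r * z^Suc D" unfolding a_def using hfac[OF z] r(2) by metis
      have E: "poly h3 z * (a * z) = of_real r * z^Suc D" using E0 by (simp only: mult.commute)
      have "poly h3 z = of_real r * z^Suc D / (a * z)" using E M z0 by (simp add: eq_divide_eq)
      also have "\<dots> = of_real (r / (cmod (z - \<rho>))^2) * z^D" using M z0 by (simp add: a_def field_simps)
      finally have "poly h3 z = of_real (r / (cmod (z - \<rho>))^2) * z^D" .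
      moreover have "r / (cmod (z - \<rho>))^2 > 0" using r(1) m by simp
      ultimately show "\<exists>r::real. r > 0 \<and> poly h3 z = of_real r * z^D" by blast
    qed
    obtain q3 where q3: "degree q3 \<le> D" "\<forall>z. cmod z = 1 \<longrightarrow> poly h3 z = of_real ((cmod (poly q3 z))^2) * z^D"
      using Suc.IH[OF dh3 pos3] by blast
    define q where "q = [:-\<rho>, 1:] * q3"
    have dq: "degree q \<le> Suc D"
    proof (cases "q3 = 0")
      case False
      have "degree q = 1 + degree q3" unfolding q_def using degree_mult_eq[of "[:-\<rho>, 1:]" q3] False by simp
      then show ?thesis using q3(1) by simp
    qed (simp add: q_def)
    have "poly h z = of_real ((cmod (poly q z))^2) * z^Suc D" if z: "cmod z = 1" for z
    proof -
      have lin: "poly [:-\<rho>, 1:] z = z - \<rho>" by simp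
      have nq: "cmod (poly q z) = cmod (z - \<rho>) * cmod (poly q3 z)"
        unfolding q_def poly_mult lin norm_mult ..
      have "poly h z = of_real ((cmod (z - \<rho>))^2) * z * (of_real ((cmod (poly q3 z))^2) * z^D)"
        using hfac[OF z] q3(2) z by simp
      also have "\<dots> = of_real ((cmod (poly q z))^2) * z^Suc D"
        unfolding nq by (simp add: power_mult_distrib mult_ac)
      finally show ?thesis .
    qed
    then show ?thesis using dq by blast
  qed
qed


definition Bm :: "complex \<Rightarrow> complex \<Rightarrow> nat \<Rightarrow> nat \<Rightarrow> complex" where
  "Bm \<alpha> \<beta> i j = (if i = 0 then (if j = 0 then \<alpha> else - cnj \<beta>) else (if j = 0 then \<beta> else cnj \<alpha>))"

lemma unitary_Bm: "\<alpha> * cnj \<alpha> + \<beta> * cnj \<beta> = 1 \<Longrightarrow> unitary_mat 2 (Bm \<alpha> \<beta>)"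
  unfolding unitary_mat_def
proof (intro allI impI)
  fix i j :: nat assume N: "\<alpha> * cnj \<alpha> + \<beta> * cnj \<beta> = 1" and "i < 2" "j < 2"
  then have "i = 0 \<or> i = 1" "j = 0 \<or> j = 1" by auto
  then show "(\<Sum>l<2. cnj (Bm \<alpha> \<beta> l i) * Bm \<alpha> \<beta> l j) = (if i = j then 1 else 0)"
    using N by (elim disjE) (simp_all add: sum2 Bm_def algebra_simps)
qed

lemma coeff_mult_top: "degree p \<le> D \<Longrightarrow> degree q \<le> D \<Longrightarrow> coeff (p * q) (2 * D) = coeff p D * coeff (q::complex poly) D"
proof -
  assume dp: "degree p \<le> D" and dq: "degree q \<le> D"
  have "coeff (p * q) (2 * D) = (\<Sum>i\<le>2*D. coeff p i * coeff q (2*D - i))" by (rule coeff_mult)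
  also have "\<dots> = (\<Sum>i\<le>2*D. if i = D then coeff p D * coeff q D else 0)"
  proof (intro sum.cong refl)
    fix i assume "i \<in> {..2*D}"
    show "coeff p i * coeff q (2*D - i) = (if i = D then coeff p D * coeff q D else 0)"
    proof (cases "i < D")
      case True then have "2*D - i > D" by simp
      then have "coeff q (2*D - i) = 0" using dq by (simp add: coeff_eq_0)
      then show ?thesis using True by simp
    next
      case False
      show ?thesis
      proof (cases "i = D")
        case False
        then have "i > D" using \<open>\<not> i < D\<close> by simp
        then have "coeff p i = 0" using dp by (simp add: coeff_eq_0)
        then show ?thesis using False by simp
      qed (simp add: mult_2)
    qed
  qed
  also have "\<dots> = coeff p D * coeff q D" by simp
  finally show ?thesis .
qed

lemma orth:
  assumes D: "D > 0" and dP: "degree P \<le> D" and dQ: "degree Q \<le> D"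
    and N: "\<forall>z. cmod z = 1 \<longrightarrow> (cmod (poly P z))^2 + (cmod (poly Q z))^2 = 1"
  shows "coeff P D * cnj (coeff P 0) + coeff Q D * cnj (coeff Q 0) = 0"
proof -
  define G where "G = P * rpoly D P + Q * rpoly D Q"
  have "G = monom 1 D"
  proof (rule circ_eq)
    fix z :: complex assume z: "cmod z = 1"
    then have z0: "z \<noteq> 0" by auto
    have "poly G z = z^D * (poly P z * cnj (poly P z) + poly Q z * cnj (poly Q z))"
      unfolding G_def using poly_rpoly[OF dP z0] poly_rpoly[OF dQ z0] cnj_circ[OF z]
      by (simp add: algebra_simps)
    also have "poly P z * cnj (poly P z) + poly Q z * cnj (poly Q z) = of_real ((cmod (poly P z))^2 + (cmod (poly Q z))^2)"
      by (simp only: of_real_add complex_norm_square)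
    also have "\<dots> = 1" using N z by simp
    finally show "poly G z = poly (monom 1 D) z" by (simp add: poly_monom)
  qed
  then have "coeff G (2 * D) = 0" using D by (simp add: coeff_monom)
  moreover have "coeff G (2 * D) = coeff P D * cnj (coeff P 0) + coeff Q D * cnj (coeff Q 0)"
    unfolding G_def coeff_add coeff_mult_top[OF dP degree_rpoly] coeff_mult_top[OF dQ degree_rpoly]
    by (simp add: coeff_rpoly)
  ultimately show ?thesis by simp
qed

lemma normalize2: "x0 \<noteq> 0 \<or> x1 \<noteq> 0 \<Longrightarrow>
  (let n = complex_of_real (sqrt ((cmod x0)^2 + (cmod x1)^2)) in
     (x0 / n) * cnj (x0 / n) + (x1 / n) * cnj (x1 / n) = 1 \<and> n \<noteq> 0)"
proof -
  assume nz: "x0 \<noteq> 0 \<or> x1 \<noteq> 0"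
  define s where "s = (cmod x0)^2 + (cmod x1)^2"
  have s: "s > 0" using nz by (auto simp: s_def add_pos_nonneg add_nonneg_pos)
  define n where "n = complex_of_real (sqrt s)"
  have n0: "n \<noteq> 0" using s by (simp add: n_def)
  have nn: "n * cnj n = of_real s" using s by (simp add: n_def flip: of_real_mult)
  have "(x0 / n) * cnj (x0 / n) + (x1 / n) * cnj (x1 / n) = (x0 * cnj x0 + x1 * cnj x1) / (n * cnj n)"
    using n0 by (simp add: field_simps)
  also have "x0 * cnj x0 + x1 * cnj x1 = of_real s" by (simp only: s_def of_real_add complex_norm_square)
  finally have "(x0 / n) * cnj (x0 / n) + (x1 / n) * cnj (x1 / n) = 1" using nn s by simp
  then show ?thesis using n0 unfolding n_def s_def Let_def by simp
qed

lemma choose_ab: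
  assumes o: "v0 * cnj u0 + v1 * cnj u1 = 0"
  shows "\<exists>\<alpha> \<beta>. \<alpha> * cnj \<alpha> + \<beta> * cnj \<beta> = 1 \<and> cnj \<alpha> * v0 + cnj \<beta> * v1 = 0 \<and> - \<beta> * u0 + \<alpha> * u1 = 0"
proof (cases "u0 \<noteq> 0 \<or> u1 \<noteq> 0")
  case True
  define n where "n = complex_of_real (sqrt ((cmod u0)^2 + (cmod u1)^2))"
  have h: "(u0 / n) * cnj (u0 / n) + (u1 / n) * cnj (u1 / n) = 1" "n \<noteq> 0"
    using normalize2[OF True] unfolding n_def Let_def by auto
  have "cnj (u0 / n) * v0 + cnj (u1 / n) * v1 = (v0 * cnj u0 + v1 * cnj u1) / cnj n"
    using h(2) by (simp add: field_simps)
  also have "\<dots> = 0" using o by simp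
  finally have a: "cnj (u0 / n) * v0 + cnj (u1 / n) * v1 = 0" .
  have b: "- (u1 / n) * u0 + (u0 / n) * u1 = 0" by (simp add: field_simps)
  show ?thesis using h(1) a b by blast
next
  case False
  then have u: "u0 = 0" "u1 = 0" by auto
  show ?thesis
  proof (cases "cnj v1 \<noteq> 0 \<or> - cnj v0 \<noteq> 0")
    case True
    define n where "n = complex_of_real (sqrt ((cmod (cnj v1))^2 + (cmod (- cnj v0))^2))"
    have h: "(cnj v1 / n) * cnj (cnj v1 / n) + (- cnj v0 / n) * cnj (- cnj v0 / n) = 1" "n \<noteq> 0"
      using normalize2[OF True] unfolding n_def Let_def by auto
    have a: "cnj (cnj v1 / n) * v0 + cnj (- cnj v0 / n) * v1 = 0" by (simp add: field_simps)
    have c: "- (- cnj v0 / n) * u0 + (cnj v1 / n) * u1 = 0" using u by simp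
    show ?thesis using h(1) a c by blast
  next
    case False
    then have "v0 = 0" "v1 = 0" by auto
    then show ?thesis using u by (intro exI[of _ 1] exI[of _ 0]) simp
  qed
qed

lemma norm_rot: "\<alpha> * cnj \<alpha> + \<beta> * cnj \<beta> = 1 \<Longrightarrow>
  (cmod (cnj \<alpha> * a + cnj \<beta> * b))^2 + (cmod (- \<beta> * a + \<alpha> * b))^2 = (cmod a)^2 + (cmod b)^2"
proof -
  assume N: "\<alpha> * cnj \<alpha> + \<beta> * cnj \<beta> = 1"
  define X where "X = cnj \<alpha> * a + cnj \<beta> * b"
  define Y where "Y = - \<beta> * a + \<alpha> * b"
  have "X * cnj X + Y * cnj Y = (\<alpha> * cnj \<alpha> + \<beta> * cnj \<beta>) * (a * cnj a + b * cnj b)"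
    by (simp add: X_def Y_def algebra_simps)
  then have "complex_of_real ((cmod X)^2 + (cmod Y)^2) = complex_of_real ((cmod a)^2 + (cmod b)^2)"
    using N by (simp only: of_real_add complex_norm_square) simp
  then show ?thesis unfolding X_def Y_def by (simp only: of_real_eq_iff)
qed

lemma deg_drop: "degree p \<le> Suc D \<Longrightarrow> coeff p (Suc D) = 0 \<Longrightarrow> degree p \<le> D"
proof (rule degree_le, intro allI impI)
  fix i assume "degree p \<le> Suc D" "coeff p (Suc D) = 0" "D < i"
  then show "coeff p i = 0" by (cases "i = Suc D") (auto simp: coeff_eq_0)
qed

lemma gqsp:
  "degree P \<le> D \<Longrightarrow> degree Q \<le> D \<Longrightarrow> (\<forall>z. cmod z = 1 \<longrightarrow> (cmod (poly P z))^2 + (cmod (poly Q z))^2 = 1) \<Longrightarrow>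
   \<exists>A0 As. unitary_mat 2 A0 \<and> (\<forall>A\<in>set As. unitary_mat 2 A) \<and> length As = D \<and>
     (\<forall>z. cmod z = 1 \<longrightarrow> qsp A0 As z 0 0 = poly P z \<and> qsp A0 As z 1 0 = poly Q z)"
proof (induction D arbitrary: P Q)
  case 0
  define p where "p = coeff P 0"
  define q where "q = coeff Q 0"
  have pP: "poly P z = p" for z using poly_le[of P 0 z] "0.prems"(1) by (simp add: p_def)
  have pQ: "poly Q z = q" for z using poly_le[of Q 0 z] "0.prems"(2) by (simp add: q_def)
  have "(cmod p)^2 + (cmod q)^2 = 1" using "0.prems"(3)[rule_format, of 1] pP pQ by simp
  then have "complex_of_real ((cmod p)^2 + (cmod q)^2) = 1" by simp
  then have N: "p * cnj p + q * cnj q = 1" by (simp only: of_real_add complex_norm_square)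
  have B: "Bm p q 0 0 = p" "Bm p q 1 0 = q" "Bm p q (Suc 0) 0 = q" by (simp_all add: Bm_def)
  show ?case
    by (intro exI[of _ "Bm p q"] exI[of _ "[]"]) (simp add: unitary_Bm[OF N] B pP pQ)
next
  case (Suc D)
  define u0 where "u0 = coeff P 0"
  define u1 where "u1 = coeff Q 0"
  define v0 where "v0 = coeff P (Suc D)"
  define v1 where "v1 = coeff Q (Suc D)"
  have o: "v0 * cnj u0 + v1 * cnj u1 = 0"
    unfolding u0_def u1_def v0_def v1_def by (rule orth[OF _ Suc.prems]) simp
  obtain \<alpha> \<beta> where N: "\<alpha> * cnj \<alpha> + \<beta> * cnj \<beta> = 1" and a: "cnj \<alpha> * v0 + cnj \<beta> * v1 = 0"
      and b: "- \<beta> * u0 + \<alpha> * u1 = 0"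
    using choose_ab[OF o] by blast
  define P' where "P' = smult (cnj \<alpha>) P + smult (cnj \<beta>) Q"
  define Qz where "Qz = smult (- \<beta>) P + smult \<alpha> Q"
  have dP': "degree P' \<le> D"
  proof (rule deg_drop)
    show "degree P' \<le> Suc D" unfolding P'_def using Suc.prems(1,2)
      by (intro degree_add_le) (auto intro: order_trans[OF degree_smult_le])
    show "coeff P' (Suc D) = 0" using a by (simp add: P'_def v0_def v1_def)
  qed
  have dQz: "degree Qz \<le> Suc D" unfolding Qz_def using Suc.prems(1,2)
    by (intro degree_add_le) (auto intro: order_trans[OF degree_smult_le])
  obtain c Q' where Qz: "Qz = pCons c Q'" by (cases Qz)
  have c: "c = 0" using b Qz by (metis Qz_def coeff_add coeff_pCons_0 coeff_smult u0_def u1_def)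
  have dQ': "degree Q' \<le> D"
  proof (cases "Q' = 0")
    case False
    then have "degree Qz = Suc (degree Q')" using Qz by (simp add: degree_pCons_eq)
    then show ?thesis using dQz by simp
  qed simp
  have pQz: "poly Qz z = z * poly Q' z" for z using Qz c by simp
  have N': "\<forall>z. cmod z = 1 \<longrightarrow> (cmod (poly P' z))^2 + (cmod (poly Q' z))^2 = 1"
  proof (intro allI impI)
    fix z :: complex assume z: "cmod z = 1"
    have "cmod (poly Q' z) = cmod (poly Qz z)" using z by (simp add: pQz norm_mult)
    then have "(cmod (poly P' z))^2 + (cmod (poly Q' z))^2 = (cmod (poly P z))^2 + (cmod (poly Q z))^2"
      using norm_rot[OF N, of "poly P z" "poly Q z"] by (simp add: P'_def Qz_def)
    then show "(cmod (poly P' z))^2 + (cmod (poly Q' z))^2 = 1" using Suc.prems(3) z by simp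
  qed
  obtain A0 As where IH: "unitary_mat 2 A0" "\<forall>A\<in>set As. unitary_mat 2 A" "length As = D"
      "\<forall>z. cmod z = 1 \<longrightarrow> qsp A0 As z 0 0 = poly P' z \<and> qsp A0 As z 1 0 = poly Q' z"
    using Suc.IH[OF dP' dQ' N'] by blast
  have "qsp A0 (Bm \<alpha> \<beta> # As) z 0 0 = poly P z \<and> qsp A0 (Bm \<alpha> \<beta> # As) z 1 0 = poly Q z"
    if z: "cmod z = 1" for z
  proof -
    define x where "x = poly P z"
    define y where "y = poly Q z"
    have q0: "qsp A0 As z 0 0 = cnj \<alpha> * x + cnj \<beta> * y" using IH(4) z by (simp add: P'_def x_def y_def)
    have q1: "z * qsp A0 As z 1 0 = - \<beta> * x + \<alpha> * y" using IH(4) z pQz[of z] by (simp add: Qz_def x_def y_def)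
    have e0: "qsp A0 (Bm \<alpha> \<beta> # As) z 0 0 = \<alpha> * qsp A0 As z 0 0 - cnj \<beta> * (z * qsp A0 As z 1 0)"
      by (simp add: mm_def sum2 Sd_def Bm_def)
    have e1: "qsp A0 (Bm \<alpha> \<beta> # As) z 1 0 = \<beta> * qsp A0 As z 0 0 + cnj \<alpha> * (z * qsp A0 As z 1 0)"
      by (simp add: mm_def sum2 Sd_def Bm_def)
    have "\<alpha> * (cnj \<alpha> * x + cnj \<beta> * y) - cnj \<beta> * (- \<beta> * x + \<alpha> * y) = (\<alpha> * cnj \<alpha> + \<beta> * cnj \<beta>) * x"
      by (simp add: algebra_simps)
    moreover have "\<beta> * (cnj \<alpha> * x + cnj \<beta> * y) + cnj \<alpha> * (- \<beta> * x + \<alpha> * y) = (\<alpha> * cnj \<alpha> + \<beta> * cnj \<beta>) * y"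
      by (simp add: algebra_simps)
    ultimately show ?thesis using N e0 e1 q0 q1 by (simp add: x_def y_def)
  qed
  then show ?case using IH unitary_Bm[OF N]
    by (intro exI[of _ A0] exI[of _ "Bm \<alpha> \<beta> # As"]) simp
qed


lemma valid_append: "circuit_valid q (A @ B) \<longleftrightarrow> circuit_valid q A \<and> circuit_valid q B"
  by (auto simp: circuit_valid_def)

lemma construct:
  fixes a :: "int \<Rightarrow> complex" and n d :: nat
  shows "\<exists>A0 As s0. unitary_mat 2 A0 \<and> (\<forall>A\<in>set As. unitary_mat 2 A) \<and> length As = 2 * d \<and> s0 \<noteq> 0 \<and>
     (\<forall>r < 2^n. qsp A0 As (wM (2^n) (int (revp n 0 r))) 0 0 =
      s0 * wM (2^n) (int d * int (revp n 0 r)) * (\<Sum>k\<in>{-int d..int d}. a k * wM (2^n) (k * int (revp n 0 r))))"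
proof -
  define K where "K = {-int d..int d}"
  define S where "S = (\<Sum>k\<in>K. cmod (a k))"
  have S0: "S \<ge> 0" by (simp add: S_def sum_nonneg)
  define s0r :: real where "s0r = 1 / (2 * (1 + S))"
  have s0r: "s0r > 0" "s0r * S < 1/2" using S0 by (auto simp: s0r_def field_simps)
  define s0 where "s0 = complex_of_real s0r"
  have s00: "s0 \<noteq> 0" using s0r by (simp add: s0_def)
  define D where "D = 2 * d"
  define P where "P = (\<Sum>k\<in>K. monom (s0 * a k) (nat (k + int d)))"
  have dP: "degree P \<le> D"
    unfolding P_def
  proof (rule degree_sum_le)
    show "finite K" by (simp add: K_def)
    fix k assume "k \<in> K"
    then have "nat (k + int d) \<le> D" by (auto simp: K_def D_def)
    then show "degree (monom (s0 * a k) (nat (k + int d))) \<le> D" using degree_monom_le order_trans by blast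
  qed
  have pP: "poly P z = s0 * (\<Sum>k\<in>K. a k * z ^ nat (k + int d))" for z
    by (simp add: P_def poly_sum poly_monom sum_distrib_left mult_ac)
  have small: "cmod (poly P z) < 1/2" if z: "cmod z = 1" for z
  proof -
    have "cmod (\<Sum>k\<in>K. a k * z ^ nat (k + int d)) \<le> (\<Sum>k\<in>K. cmod (a k * z ^ nat (k + int d)))"
      by (rule norm_sum)
    also have "\<dots> = S" using z by (simp add: S_def norm_mult norm_power)
    finally have "cmod (\<Sum>k\<in>K. a k * z ^ nat (k + int d)) \<le> S" .
    then have "cmod (poly P z) \<le> s0r * S" using s0r(1) by (simp add: pP s0_def norm_mult mult_left_mono)
    then show ?thesis using s0r(2) by simp
  qed
  define h where "h = monom 1 D - P * rpoly D P"
  have dh: "degree h \<le> 2 * D"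
  proof -
    have "degree (P * rpoly D P) \<le> 2 * D"
      using degree_mult_le[of P "rpoly D P"] dP degree_rpoly[of D P] by simp
    moreover have "degree (monom (1::complex) D) \<le> 2 * D" by (simp add: degree_monom_eq)
    ultimately show ?thesis unfolding h_def by (intro degree_diff_le)
  qed
  have ph: "poly h z = of_real (1 - (cmod (poly P z))^2) * z^D" if z: "cmod z = 1" for z
  proof -
    have z0: "z \<noteq> 0" using z by auto
    have "poly h z = z^D - poly P z * (z^D * cnj (poly P z))"
      unfolding h_def using poly_rpoly[OF dP z0] cnj_circ[OF z] by (simp add: poly_monom)
    also have "\<dots> = (1 - poly P z * cnj (poly P z)) * z^D" by (simp add: algebra_simps)
    also have "poly P z * cnj (poly P z) = of_real ((cmod (poly P z))^2)" by (simp only: complex_norm_square)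
    finally show ?thesis by simp
  qed
  have pos: "\<forall>z. cmod z = 1 \<longrightarrow> (\<exists>r::real. r > 0 \<and> poly h z = of_real r * z^D)"
  proof (intro allI impI)
    fix z :: complex assume z: "cmod z = 1"
    have "cmod (poly P z) < 1/2" by (rule small[OF z])
    then have "(cmod (poly P z))^2 < (1/2)^2" by (intro power_strict_mono) auto
    then have "(cmod (poly P z))^2 < 1" by (simp add: power2_eq_square)
    then show "\<exists>r::real. r > 0 \<and> poly h z = of_real r * z^D" using ph[OF z] by (intro exI[of _ "1 - (cmod (poly P z))^2"]) simp
  qed
  obtain q where q: "degree q \<le> D" "\<forall>z. cmod z = 1 \<longrightarrow> poly h z = of_real ((cmod (poly q z))^2) * z^D"
    using fejer_riesz[OF dh pos] by blast
  have N: "\<forall>z. cmod z = 1 \<longrightarrow> (cmod (poly P z))^2 + (cmod (poly q z))^2 = 1"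
  proof (intro allI impI)
    fix z :: complex assume z: "cmod z = 1"
    then have "z^D \<noteq> 0" by auto
    moreover have "of_real (1 - (cmod (poly P z))^2) * z^D = of_real ((cmod (poly q z))^2) * z^D"
      using ph[OF z] q(2)[rule_format, OF z] by (rule trans[OF sym])
    ultimately have "complex_of_real (1 - (cmod (poly P z))^2) = of_real ((cmod (poly q z))^2)"
      by (metis mult_right_cancel)
    then have "1 - (cmod (poly P z))^2 = (cmod (poly q z))^2" by (simp only: of_real_eq_iff)
    then show "(cmod (poly P z))^2 + (cmod (poly q z))^2 = 1" by simp
  qed
  obtain A0 As where G: "unitary_mat 2 A0" "\<forall>A\<in>set As. unitary_mat 2 A" "length As = D"
      "\<forall>z. cmod z = 1 \<longrightarrow> qsp A0 As z 0 0 = poly P z \<and> qsp A0 As z 1 0 = poly q z"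
    using gqsp[OF dP q(1) N] by blast
  have Q: "qsp A0 As (wM (2^n) (int (revp n 0 r))) 0 0 =
      s0 * wM (2^n) (int d * int (revp n 0 r)) * (\<Sum>k\<in>K. a k * wM (2^n) (k * int (revp n 0 r)))" for r
  proof -
    define R where "R = int (revp n 0 r)"
    define z where "z = wM (2^n) R"
    have z: "cmod z = 1" by (simp add: z_def)
    have "qsp A0 As z 0 0 = s0 * (\<Sum>k\<in>K. a k * z ^ nat (k + int d))" using G(4) z pP by simp
    also have "(\<Sum>k\<in>K. a k * z ^ nat (k + int d)) = (\<Sum>k\<in>K. wM (2^n) (int d * R) * (a k * wM (2^n) (k * R)))"
    proof (intro sum.cong refl)
      fix k assume "k \<in> K"
      then have kd: "int (nat (k + int d)) = k + int d" by (simp add: K_def)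
      have "z ^ nat (k + int d) = wM (2^n) (R * (k + int d))" unfolding z_def wM_pow kd ..
      also have "\<dots> = wM (2^n) (int d * R) * wM (2^n) (k * R)" by (simp add: wM_add[symmetric] algebra_simps)
      finally show "a k * z ^ nat (k + int d) = wM (2^n) (int d * R) * (a k * wM (2^n) (k * R))" by simp
    qed
    finally show ?thesis unfolding z_def R_def by (simp add: sum_distrib_left mult_ac)
  qed
  show ?thesis using G s00 Q unfolding D_def K_def by blast
qed


theorem theorem12:
  "\<exists>c::real. \<forall>n::nat. n \<ge> 1 \<longrightarrow> (\<forall>d::nat. \<forall>a::int \<Rightarrow> complex.
     \<exists>C::gate list. \<exists>s::complex.
        circuit_valid (n + 1) C \<and>
        real (length C) \<le> c * (real d * log 2 (2 ^ n) + (log 2 (2 ^ n))\<^sup>2) \<and>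
        s \<noteq> 0 \<and>
        (\<forall>x::nat \<Rightarrow> complex. \<forall>m < 2 ^ n.
           run_circuit C (\<lambda>j. if j < 2 ^ n then x j else 0) m
             = s * conv (2 ^ n) d a x m))"
proof (rule exI[of _ "5::real"], intro allI impI)
  fix n d :: nat and a :: "int \<Rightarrow> complex"
  assume n: "n \<ge> 1"
  obtain A0 As s0 where H: "unitary_mat 2 A0 \<and> (\<forall>A\<in>set As. unitary_mat 2 A) \<and> length As = 2 * d \<and> s0 \<noteq> 0 \<and>
     (\<forall>r < 2^n. qsp A0 As (wM (2^n) (int (revp n 0 r))) 0 0 =
      s0 * wM (2^n) (int d * int (revp n 0 r)) * (\<Sum>k\<in>{-int d..int d}. a k * wM (2^n) (k * int (revp n 0 r))))"
    using construct[where n=n and d=d and a=a] by (elim exE) (rule that)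
  have U: "unitary_mat 2 A0" "\<forall>A\<in>set As. unitary_mat 2 A" and lA: "length As = 2 * d"
      and s0: "s0 \<noteq> 0"
      and Q: "\<forall>r < 2^n. qsp A0 As (wM (2^n) (int (revp n 0 r))) 0 0 =
      s0 * wM (2^n) (int d * int (revp n 0 r)) * (\<Sum>k\<in>{-int d..int d}. a k * wM (2^n) (k * int (revp n 0 r)))"
    using H by simp_all
  define C where "C = circ n d A0 As"
  have valid: "circuit_valid (n + 1) C"
    unfolding C_def circ_def valid_append
    using valid_qft valid_iqft valid_mid[OF U] valid_corr by simp
  have len: "length C \<le> n * n + (1 + 2 * d * (n + 1) + n) + n * n"
  proof -
    have "length C = length (qft n) + (length (mid n A0 As) + length (corr n d)) + length (iqft n)"
      by (simp add: C_def circ_def)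
    then show ?thesis using length_qft[of n] length_iqft[of n] by (simp add: length_mid length_corr lA)
  qed
  have arith: "n * n + (1 + 2 * d * (n + 1) + n) + n * n \<le> 5 * (d * n + n * n)"
  proof -
    have "d \<le> d * n" using n by simp
    moreover have "1 \<le> n * n" using n by simp
    moreover have "n \<le> n * n" using n by simp
    moreover have "n * n + (1 + 2 * d * (n + 1) + n) + n * n = 2*(n*n) + 1 + 2*(d*n) + 2*d + n"
      by (simp add: algebra_simps)
    moreover have "5 * (d * n + n * n) = 5*(d*n) + 5*(n*n)" by simp
    ultimately show ?thesis by linarith
  qed
  have lg: "log 2 (2 ^ n) = real n" by simp
  have "real (length C) \<le> 5 * (real d * log 2 (2 ^ n) + (log 2 (2 ^ n))\<^sup>2)"
  proof -
    have "real (length C) \<le> real (5 * (d * n + n * n))" using len arith by linarith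
    also have "\<dots> = 5 * (real d * log 2 (2 ^ n) + (log 2 (2 ^ n))\<^sup>2)"
      unfolding lg by (simp add: power2_eq_square)
    finally show ?thesis .
  qed
  moreover have "\<forall>x::nat \<Rightarrow> complex. \<forall>m < 2 ^ n.
           run_circuit C (\<lambda>j. if j < 2 ^ n then x j else 0) m = s0 * conv (2 ^ n) d a x m"
  proof (intro allI impI)
    fix x :: "nat \<Rightarrow> complex" and m :: nat assume m: "m < 2^n"
    show "run_circuit C (\<lambda>j. if j < 2 ^ n then x j else 0) m = s0 * conv (2 ^ n) d a x m"
      unfolding C_def by (rule circ_correct[OF _ m]) (use Q in simp)
  qed
  ultimately show "\<exists>C s. circuit_valid (n + 1) C \<and>
        real (length C) \<le> 5 * (real d * log 2 (2 ^ n) + (log 2 (2 ^ n))\<^sup>2) \<and>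
        s \<noteq> 0 \<and>
        (\<forall>x::nat \<Rightarrow> complex. \<forall>m < 2 ^ n.
           run_circuit C (\<lambda>j. if j < 2 ^ n then x j else 0) m = s * conv (2 ^ n) d a x m)"
    using valid s0 by (intro exI[of _ C] exI[of _ s0]) simp
qed


end
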